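(* Under the recursive network formation model with the utility function described in the context, the following hold. 1. If $c>b_1$ (for any $c_0$), no node ever enters. The resulting single-node network (which is both a star and a null graph) is efficient. 2. If the conditions $b_1-b_2+\gamma b_2\le c<b_1$ and $c_0<(1-\gamma)(b_2-b_3)$ hold, then the star network formed is efficient, for every number of nodes. 3. If the conditions $c<b_1-b_2$ and $c_0\le(1-\gamma)b_2$ hold, then the complete network formed is efficient, for every number of nodes.
   Context: Networks are finite simple undirected graphs whose vertices (nodes) are self-interested agents. Parameters: benefits $b_1>b_2>b_3>\dots>0$, where $b_i$ is the benefit a node obtains from a node at distance $i$; a link cost $c$ per immediate neighbor; an intermediation fraction $\gamma$ with $0\le\gamma<1$; and a network entry factor $c_0$. Notation: $N$ is the set of nodes currently in the network, $d_j$ the degree of $j$, and $l(j,w)$ the graph distance. A node $x$ is essential for a pair $y,z$ (with $x\notin\{y,z\}$) if $x$ lies on every path joining $y$ and $z$. Write $E(y,z)$ for the set of nodes essential for $y,z$ and $e(y,z)=|E(y,z)|$. Only pairs joined by a path contribute to the sums below. Utility of node $j$ in network $g$: $$u_j(g)=-c_0\,d_{T(j)}\mathbf 1_{\{j=\mathrm{NE}\}}+d_j(b_1-c)+\sum_{w\in N,\ l(j,w)>1}b_{l(j,w)}-\sum_{w\in N,\ E(j,w)\ne\emptyset}\gamma\, b_{l(j,w)}+\sum_{y,z\in N,\ j\in E(y,z)}\frac{\gamma}{e(y,z)}\,2\,b_{l(y,z)}.$$ Here $\mathbf 1_{\{j=\mathrm{NE}\}}=1$ exactly when $j$ is a newly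 entering node evaluating the creation of its first link. $T(j)$ is the existing node to which $j$ forms that first link, and $d_{T(j)}$ is that node's degree before the link. The network before entry gives the entering node utility $0$. Pairwise stability: $g$ is pairwise stable if (a) for every link $(i,j)\in g$, $u_i(g\setminus\{(i,j)\})\le u_i(g)$ and $u_j(g\setminus\{(i,j)\})\le u_j(g)$; and (b) for every non-link $(i,j)\notin g$, if $u_i(g\cup\{(i,j)\})>u_i(g)$ then $u_j(g\cup\{(i,j)\})<u_j(g)$. Recursive model of network formation: - The process starts with a single node. - When the current network of $n-1$ nodes is pairwise stable, a new node considers entering. Its options are to stay out or to propose a link to one existing node. The link forms iff the receiving node's utility does not decrease. No existing node can link to the newcomer before it has formed this first link. - After entry, nodes are repeatedly chosen at random to move. A chosen node plays a myopic best response among three options: create a link with a non-neighbor (the link forms only if the other node's utility does not decrease, which the proposer anticipates); delete a link with a neighbor (unilaterally); or keep the status quo. It alters a link only if this strictly increases its current utility. - This continues until the network is pairwise stable; then the next node considers entering, and so on. Efficiency: since intermediation rents are transfers and each node pays the entry fee at most once, the welfare of a network $g$ on node set $N$ is $$W(g)=\sum_{j\in N}\Big(d_j(b_1-c)+\sum_{w\in N,\ l(j,w)>1}b_{l(j,w)}\Big).$$ The network $g$ is efficient if $W(g)\ge W(g')$ for every network $g'$ on the same node set $N$. *)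

theory Defs
  imports Complex_Main
begin

(* Networks: nodes are the natural numbers 0,...,n-1 (node k is the k-th to enter);
   a network is a set of links, each link a 2-element set {x,y}. *)

definition graph_on :: "nat \<Rightarrow> nat set set \<Rightarrow> bool" where
  "graph_on n g \<longleftrightarrow> (\<forall>e\<in>g. \<exists>x y. x \<noteq> y \<and> x < n \<and> y < n \<and> e = {x, y})"

definition deg :: "nat set set \<Rightarrow> nat \<Rightarrow> nat" where
  "deg g j = card {k. k \<noteq> j \<and> {j, k} \<in> g}"

definition is_path :: "nat set set \<Rightarrow> nat \<Rightarrow> nat \<Rightarrow> nat list \<Rightarrow> bool" where
  "is_path g y z xs \<longleftrightarrow> xs \<noteq> [] \<and> hd xs = y \<and> last xs = z \<and> distinct xs \<and>
     (\<forall>i. Suc i < length xs \<longrightarrow> {xs ! i, xs ! Suc i} \<in> g)"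

definition conn :: "nat set set \<Rightarrow> nat \<Rightarrow> nat \<Rightarrow> bool" where
  "conn g y z \<longleftrightarrow> (\<exists>xs. is_path g y z xs)"

definition gdist :: "nat set set \<Rightarrow> nat \<Rightarrow> nat \<Rightarrow> nat" where
  "gdist g y z = (LEAST k. \<exists>xs. is_path g y z xs \<and> length xs = Suc k)"

definition essential :: "nat set set \<Rightarrow> nat \<Rightarrow> nat \<Rightarrow> nat \<Rightarrow> bool" where
  "essential g x y z \<longleftrightarrow> x \<noteq> y \<and> x \<noteq> z \<and> (\<forall>xs. is_path g y z xs \<longrightarrow> x \<in> set xs)"

definition ess_set :: "nat \<Rightarrow> nat set set \<Rightarrow> nat \<Rightarrow> nat \<Rightarrow> nat set" where
  "ess_set n g y z = {x. x < n \<and> essential g x y z}"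

(* utility of node j in network g on nodes {..<n}, without the entry term *)
definition util :: "(nat \<Rightarrow> real) \<Rightarrow> real \<Rightarrow> real \<Rightarrow> nat \<Rightarrow> nat set set \<Rightarrow> nat \<Rightarrow> real" where
  "util b c \<gamma> n g j =
     real (deg g j) * (b 1 - c)
   + (\<Sum>w\<in>{w. w < n \<and> conn g j w \<and> gdist g j w > 1}. b (gdist g j w))
   - (\<Sum>w\<in>{w. w < n \<and> conn g j w \<and> ess_set n g j w \<noteq> {}}. \<gamma> * b (gdist g j w))
   + (\<Sum>(y,z)\<in>{(y,z). y < n \<and> z < n \<and> y < z \<and> conn g y z \<and> j \<in> ess_set n g y z}.
        \<gamma> / real (card (ess_set n g y z)) * 2 * b (gdist g y z))"

(* Entry of newcomer n into a network g on {..<n}, first link to T.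
   Entrant's value: its utility including the entry term -c0 * d_T (d_T before the link). *)
definition entrant_value :: "(nat \<Rightarrow> real) \<Rightarrow> real \<Rightarrow> real \<Rightarrow> real \<Rightarrow> nat \<Rightarrow> nat set set \<Rightarrow> nat \<Rightarrow> real" where
  "entrant_value b c \<gamma> c0 n g T =
     util b c \<gamma> (Suc n) (insert {n, T} g) n - c0 * real (deg g T)"

definition entry_accepted :: "(nat \<Rightarrow> real) \<Rightarrow> real \<Rightarrow> real \<Rightarrow> nat \<Rightarrow> nat set set \<Rightarrow> nat \<Rightarrow> bool" where
  "entry_accepted b c \<gamma> n g T \<longleftrightarrow>
     T < n \<and> util b c \<gamma> n g T \<le> util b c \<gamma> (Suc n) (insert {n, T} g) T"

(* the newcomer enters by linking to T: T is a best (acceptable) choice and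
   entering is strictly better than staying out (utility 0) *)
definition enters :: "(nat \<Rightarrow> real) \<Rightarrow> real \<Rightarrow> real \<Rightarrow> real \<Rightarrow> nat \<Rightarrow> nat set set \<Rightarrow> nat \<Rightarrow> bool" where
  "enters b c \<gamma> c0 n g T \<longleftrightarrow>
     entry_accepted b c \<gamma> n g T \<and> entrant_value b c \<gamma> c0 n g T > 0 \<and>
     (\<forall>T'. entry_accepted b c \<gamma> n g T' \<longrightarrow> entrant_value b c \<gamma> c0 n g T' \<le> entrant_value b c \<gamma> c0 n g T)"

definition options :: "(nat \<Rightarrow> real) \<Rightarrow> real \<Rightarrow> real \<Rightarrow> nat \<Rightarrow> nat set set \<Rightarrow> nat \<Rightarrow> nat set set set" where
  "options b c \<gamma> n g i =
     {insert {i, k} g | k. k < n \<and> k \<noteq> i \<and> {i, k} \<notin> g \<and>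
                          util b c \<gamma> n g k \<le> util b c \<gamma> n (insert {i, k} g) k}
   \<union> {g - {{i, k}} | k. k \<noteq> i \<and> {i, k} \<in> g}"

definition move :: "(nat \<Rightarrow> real) \<Rightarrow> real \<Rightarrow> real \<Rightarrow> nat \<Rightarrow> nat set set \<Rightarrow> nat set set \<Rightarrow> bool" where
  "move b c \<gamma> n g g' \<longleftrightarrow> (\<exists>i<n. g' \<in> options b c \<gamma> n g i \<and>
       util b c \<gamma> n g i < util b c \<gamma> n g' i \<and>
       (\<forall>h\<in>options b c \<gamma> n g i. util b c \<gamma> n h i \<le> util b c \<gamma> n g' i))"

definition pairwise_stable :: "(nat \<Rightarrow> real) \<Rightarrow> real \<Rightarrow> real \<Rightarrow> nat \<Rightarrow> nat set set \<Rightarrow> bool" where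
  "pairwise_stable b c \<gamma> n g \<longleftrightarrow>
     (\<forall>i j. i \<noteq> j \<and> {i, j} \<in> g \<longrightarrow>
        util b c \<gamma> n (g - {{i, j}}) i \<le> util b c \<gamma> n g i \<and>
        util b c \<gamma> n (g - {{i, j}}) j \<le> util b c \<gamma> n g j) \<and>
     (\<forall>i j. i < n \<and> j < n \<and> i \<noteq> j \<and> {i, j} \<notin> g \<longrightarrow>
        util b c \<gamma> n g i < util b c \<gamma> n (insert {i, j} g) i \<longrightarrow>
        util b c \<gamma> n (insert {i, j} g) j < util b c \<gamma> n g j)"

inductive formed :: "(nat \<Rightarrow> real) \<Rightarrow> real \<Rightarrow> real \<Rightarrow> real \<Rightarrow> nat \<Rightarrow> nat set set \<Rightarrow> bool"
  for b c \<gamma> c0 where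
  start: "formed b c \<gamma> c0 (Suc 0) {}"
| step: "formed b c \<gamma> c0 n g \<Longrightarrow> enters b c \<gamma> c0 n g T \<Longrightarrow>
         (move b c \<gamma> (Suc n))\<^sup>*\<^sup>* (insert {n, T} g) g' \<Longrightarrow>
         pairwise_stable b c \<gamma> (Suc n) g' \<Longrightarrow> formed b c \<gamma> c0 (Suc n) g'"

definition welfare :: "(nat \<Rightarrow> real) \<Rightarrow> real \<Rightarrow> nat \<Rightarrow> nat set set \<Rightarrow> real" where
  "welfare b c n g = (\<Sum>j<n. real (deg g j) * (b 1 - c)
      + (\<Sum>w\<in>{w. w < n \<and> conn g j w \<and> gdist g j w > 1}. b (gdist g j w)))"

definition efficient :: "(nat \<Rightarrow> real) \<Rightarrow> real \<Rightarrow> nat \<Rightarrow> nat set set \<Rightarrow> bool" where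
  "efficient b c n g \<longleftrightarrow> graph_on n g \<and>
     (\<forall>g'. graph_on n g' \<longrightarrow> welfare b c n g' \<le> welfare b c n g)"

end

theory Submission
  imports Defs
begin
inductive rtp :: "('a \<Rightarrow> 'a \<Rightarrow> bool) \<Rightarrow> 'a \<Rightarrow> 'a list \<Rightarrow> 'a \<Rightarrow> bool"
  for r :: "'a \<Rightarrow> 'a \<Rightarrow> bool"
where
  base: "rtp r x [] x"
| step: "r x y \<Longrightarrow> rtp r y ys z \<Longrightarrow> rtp r x (y # ys) z"

lemma rtranclp_eq_rtp: "r\<^sup>*\<^sup>* x y \<longleftrightarrow> (\<exists>xs. rtp r x xs y)"
proof
  show "\<exists>xs. rtp r x xs y" if "r\<^sup>*\<^sup>* x y"
    using that
  proof (induct rule: converse_rtranclp_induct)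
    case base
    have "rtp r y [] y" by (rule rtp.base)
    then show ?case ..
  next
    case (step x z)
    from \<open>\<exists>xs. rtp r z xs y\<close>
    obtain xs where "rtp r z xs y" ..
    with \<open>r x z\<close> have "rtp r x (z # xs) y"
      by (rule rtp.step)
    then show ?case ..
  qed
  show "r\<^sup>*\<^sup>* x y" if "\<exists>xs. rtp r x xs y"
  proof -
    from that obtain xs where "rtp r x xs y" ..
    then show ?thesis
    proof induct
      case (base x)
      show ?case
        by (rule rtranclp.rtrancl_refl)
    next
      case (step x y ys z)
      from \<open>r x y\<close> \<open>r\<^sup>*\<^sup>* y z\<close> show ?case
        by (rule converse_rtranclp_into_rtranclp)
    qed
  qed
qed

lemma rtp_trans:
  assumes xy: "rtp r x xs y"
    and yz: "rtp r y ys z"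
  shows "rtp r x (xs @ ys) z" using xy yz
proof (induct arbitrary: z)
  case (base x)
  then show ?case by simp
next
  case (step x y xs)
  then have "rtp r y (xs @ ys) z"
    by simp
  with \<open>r x y\<close> have "rtp r x (y # (xs @ ys)) z"
    by (rule rtp.step)
  then show ?case by simp
qed

lemma rtp_appendE:
  assumes xz: "rtp r x (xs @ y # ys) z"
  obtains "rtp r x (xs @ [y]) y" and "rtp r y ys z"
  using xz
proof (induct xs arbitrary: x)
  case Nil
  then have "rtp r x (y # ys) z" by simp
  then obtain xy: "r x y" and yz: "rtp r y ys z"
    by cases auto
  from xy have "rtp r x [y] y"
    by (rule rtp.step [OF _ rtp.base])
  then have "rtp r x ([] @ [y]) y" by simp
  then show thesis using yz by (rule Nil)
next
  case (Cons a as)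
  then have "rtp r x (a # (as @ y # ys)) z" by simp
  then obtain xa: "r x a" and az: "rtp r a (as @ y # ys) z"
    by cases auto
  show thesis
  proof (rule Cons(1) [OF _ az])
    assume "rtp r y ys z"
    assume "rtp r a (as @ [y]) y"
    with xa have "rtp r x (a # (as @ [y])) y"
      by (rule rtp.step)
    then have "rtp r x ((a # as) @ [y]) y"
      by simp
    then show thesis using \<open>rtp r y ys z\<close>
      by (rule Cons(2))
  qed
qed

lemma rtp_distinct:
  assumes xy: "rtp r x xs y"
  obtains xs' where "rtp r x xs' y" and "distinct (x # xs')" and "set xs' \<subseteq> set xs"
  using xy
proof (induct xs rule: measure_induct_rule [of length])
  case (less xs)
  show ?case
  proof (cases "distinct (x # xs)")
    case True
    with \<open>rtp r x xs y\<close> show ?thesis by (rule less) simp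
  next
    case False
    then have "\<exists>as bs cs a. x # xs = as @ [a] @ bs @ [a] @ cs"
      by (rule not_distinct_decomp)
    then obtain as bs cs a where xxs: "x # xs = as @ [a] @ bs @ [a] @ cs"
      by iprover
    show ?thesis
    proof (cases as)
      case Nil
      with xxs have x: "x = a" and xs: "xs = bs @ a # cs"
        by auto
      from x xs \<open>rtp r x xs y\<close> have cs: "rtp r x cs y" "set cs \<subseteq> set xs"
        by (auto elim: rtp_appendE)
      from xs have "length cs < length xs" by simp
      then show ?thesis
        by (rule less(1))(blast intro: cs less(2) order_trans del: subsetI)+
    next
      case (Cons d ds)
      with xxs have xs: "xs = ds @ a # (bs @ [a] @ cs)"
        by auto
      with \<open>rtp r x xs y\<close> obtain xa: "rtp r x (ds @ [a]) a"
        and ay: "rtp r a (bs @ a # cs) y"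
        by (auto elim: rtp_appendE)
      from ay have "rtp r a cs y" by (auto elim: rtp_appendE)
      with xa have xy: "rtp r x ((ds @ [a]) @ cs) y"
        by (rule rtp_trans)
      from xs have set: "set ((ds @ [a]) @ cs) \<subseteq> set xs" by auto
      from xs have "length ((ds @ [a]) @ cs) < length xs" by simp
      then show ?thesis
        by (rule less(1))(blast intro: xy less(2) set[THEN subsetD])+
    qed
  qed
qed
lemma is_path_Nil[simp]: "\<not> is_path g y z []"
  by (simp add: is_path_def)

lemma is_path_single[simp]: "is_path g y z [a] \<longleftrightarrow> a = y \<and> y = z"
  by (auto simp: is_path_def)

lemma is_path_Cons2: "is_path g y z (a # b # xs) \<longleftrightarrow>
   a = y \<and> {y, b} \<in> g \<and> y \<notin> set (b # xs) \<and> is_path g b z (b # xs)"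
proof
  assume H: "is_path g y z (a # b # xs)"
  have "\<forall>i. Suc i < length (b # xs) \<longrightarrow> {(b#xs) ! i, (b#xs) ! Suc i} \<in> g"
  proof (intro allI impI)
    fix i assume "Suc i < length (b # xs)"
    then have "Suc (Suc i) < length (a # b # xs)" by simp
    with H have "{(a#b#xs) ! Suc i, (a#b#xs) ! Suc (Suc i)} \<in> g" unfolding is_path_def by blast
    then show "{(b#xs) ! i, (b#xs) ! Suc i} \<in> g" by simp
  qed
  moreover have "{a, b} \<in> g"
  proof -
    have "Suc 0 < length (a#b#xs)" by simp
    then have "{(a#b#xs) ! 0, (a#b#xs) ! Suc 0} \<in> g" using H unfolding is_path_def by blast
    then show ?thesis by simp
  qed
  ultimately show "a = y \<and> {y, b} \<in> g \<and> y \<notin> set (b # xs) \<and> is_path g b z (b # xs)"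
    using H unfolding is_path_def by auto
next
  assume H: "a = y \<and> {y, b} \<in> g \<and> y \<notin> set (b # xs) \<and> is_path g b z (b # xs)"
  have "\<forall>i. Suc i < length (a # b # xs) \<longrightarrow> {(a#b#xs) ! i, (a#b#xs) ! Suc i} \<in> g"
  proof (intro allI impI)
    fix i assume i: "Suc i < length (a # b # xs)"
    show "{(a#b#xs) ! i, (a#b#xs) ! Suc i} \<in> g"
    proof (cases i)
      case 0 then show ?thesis using H by simp
    next
      case (Suc k)
      then have "Suc k < length (b # xs)" using i by simp
      then have "{(b#xs) ! k, (b#xs) ! Suc k} \<in> g" using H unfolding is_path_def by blast
      then show ?thesis using Suc by simp
    qed
  qed
  then show "is_path g y z (a # b # xs)" using H unfolding is_path_def by auto
qed

definition adj :: "nat set set \<Rightarrow> nat \<Rightarrow> nat \<Rightarrow> bool" where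
  "adj g x y \<longleftrightarrow> {x, y} \<in> g"

lemma is_path_rtp: "is_path g y z (y # ys) \<longleftrightarrow> rtp (adj g) y ys z \<and> distinct (y # ys)"
proof (induction ys arbitrary: y)
  case Nil
  then show ?case by (auto elim: rtp.cases intro: rtp.base)
next
  case (Cons a ys)
  show ?case
    by (auto simp: is_path_Cons2 Cons adj_def intro: rtp.step elim: rtp.cases)
qed

lemma is_path_hd: "is_path g y z xs \<Longrightarrow> \<exists>ys. xs = y # ys"
  by (cases xs) (auto simp: is_path_def)

lemma conn_rtranclp: "conn g y z \<longleftrightarrow> (adj g)\<^sup>*\<^sup>* y z"
proof
  assume "conn g y z"
  then obtain xs where "is_path g y z xs" unfolding conn_def by blast
  then obtain ys where "xs = y # ys" using is_path_hd by blast
  then show "(adj g)\<^sup>*\<^sup>* y z" using \<open>is_path g y z xs\<close> is_path_rtp rtranclp_eq_rtp by metis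
next
  assume "(adj g)\<^sup>*\<^sup>* y z"
  then obtain ys where "rtp (adj g) y ys z" using rtranclp_eq_rtp by metis
  then obtain ys' where "rtp (adj g) y ys' z" "distinct (y # ys')" by (rule rtp_distinct)
  then have "is_path g y z (y # ys')" using is_path_rtp[of g y z ys'] by simp
  then show "conn g y z" unfolding conn_def by blast
qed

lemma adj_sym: "adj g x y = adj g y x"
  unfolding adj_def by (metis insert_commute)

lemma conn_refl[simp]: "conn g y y"
  unfolding conn_def by (rule exI[of _ "[y]"]) simp

lemma conn_sym: "conn g y z \<Longrightarrow> conn g z y"
  unfolding conn_rtranclp
proof (induction rule: rtranclp_induct)
  case base then show ?case by simp
next
  case (step y z)
  have "adj g z y" using step(2) adj_sym[of g y z] by simp
  then show ?case using step(3) by (rule converse_rtranclp_into_rtranclp)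
qed

lemma conn_trans: "conn g x y \<Longrightarrow> conn g y z \<Longrightarrow> conn g x z"
  unfolding conn_rtranclp by simp

lemma conn_edge: "{x,y} \<in> g \<Longrightarrow> conn g x y"
  unfolding conn_rtranclp adj_def by (rule r_into_rtranclp)


lemma path_edge: "is_path g y z xs \<Longrightarrow> Suc i < length xs \<Longrightarrow> {xs ! i, xs ! Suc i} \<in> g"
  unfolding is_path_def by blast

lemma path_hd: "is_path g y z xs \<Longrightarrow> xs ! 0 = y"
  unfolding is_path_def by (metis hd_conv_nth)

lemma path_last: "is_path g y z xs \<Longrightarrow> xs ! (length xs - 1) = z"
  unfolding is_path_def by (metis last_conv_nth)

lemma path_len2: "is_path g y z xs \<Longrightarrow> y \<noteq> z \<Longrightarrow> 2 \<le> length xs"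
proof -
  assume p: "is_path g y z xs" and ne: "y \<noteq> z"
  obtain ys where xs: "xs = y # ys" using is_path_hd[OF p] by blast
  show ?thesis
  proof (cases ys)
    case Nil then show ?thesis using p ne xs by simp
  next
    case (Cons a l) then show ?thesis using xs by simp
  qed
qed

lemma path_first_edge: "is_path g y z xs \<Longrightarrow> y \<noteq> z \<Longrightarrow> {y, xs ! 1} \<in> g"
  using path_edge[of g y z xs 0] path_len2 path_hd by fastforce

lemma path_last_edge: "is_path g y z xs \<Longrightarrow> y \<noteq> z \<Longrightarrow> {xs ! (length xs - 2), z} \<in> g"
proof -
  assume p: "is_path g y z xs" and ne: "y \<noteq> z"
  have l: "2 \<le> length xs" using path_len2[OF p ne] .
  have "{xs ! (length xs - 2), xs ! Suc (length xs - 2)} \<in> g" using path_edge[OF p, of "length xs - 2"] l by simp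
  moreover have "Suc (length xs - 2) = length xs - 1" using l by simp
  ultimately show ?thesis using path_last[OF p] by simp
qed

lemma gdist_le: "is_path g y z xs \<Longrightarrow> gdist g y z \<le> length xs - 1"
proof -
  assume p: "is_path g y z xs"
  have "xs \<noteq> []" using p by (auto simp: is_path_def)
  then have "length xs = Suc (length xs - 1)" by simp
  then have "\<exists>ys. is_path g y z ys \<and> length ys = Suc (length xs - 1)" using p by blast
  then show ?thesis unfolding gdist_def by (rule Least_le)
qed

lemma gdist_path: "conn g y z \<Longrightarrow> \<exists>xs. is_path g y z xs \<and> length xs = Suc (gdist g y z)"
proof -
  assume "conn g y z"
  then obtain xs where p: "is_path g y z xs" unfolding conn_def by blast
  have "xs \<noteq> []" using p by (auto simp: is_path_def)
  then have "length xs = Suc (length xs - 1)" by simp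
  then have "\<exists>k. \<exists>ys. is_path g y z ys \<and> length ys = Suc k" using p by blast
  then show ?thesis unfolding gdist_def by (rule LeastI_ex)
qed

lemma gdist_refl[simp]: "gdist g y y = 0"
  using gdist_le[of g y y "[y]"] by simp

lemma gdist_ge: "conn g y z \<Longrightarrow> (\<And>xs. is_path g y z xs \<Longrightarrow> m < length xs) \<Longrightarrow> m \<le> gdist g y z"
  using gdist_path by fastforce

lemma gdist_pos: "conn g y z \<Longrightarrow> y \<noteq> z \<Longrightarrow> 1 \<le> gdist g y z"
  using gdist_ge[of g y z 1] path_len2 by fastforce

lemma gdist_edge: "{y, z} \<in> g \<Longrightarrow> y \<noteq> z \<Longrightarrow> gdist g y z = 1"
proof -
  assume e: "{y,z} \<in> g" and ne: "y \<noteq> z"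
  have "is_path g y z [y, z]" using e ne by (simp add: is_path_Cons2)
  then have "gdist g y z \<le> 1" using gdist_le by fastforce
  moreover have "1 \<le> gdist g y z" using gdist_pos[OF conn_edge[OF e] ne] .
  ultimately show ?thesis by simp
qed

lemma gdist_one_edge: "conn g y z \<Longrightarrow> gdist g y z = 1 \<Longrightarrow> {y, z} \<in> g"
proof -
  assume c: "conn g y z" and d: "gdist g y z = 1"
  obtain xs where p: "is_path g y z xs" and l: "length xs = 2" using gdist_path[OF c] d by auto
  have "{xs ! 0, xs ! Suc 0} \<in> g" using path_edge[OF p, of 0] l by simp
  moreover have "xs ! Suc 0 = z" using path_last[OF p] l by simp
  ultimately show ?thesis using path_hd[OF p] by simp
qed

lemma ess_dist: "essential g x y z \<Longrightarrow> conn g y z \<Longrightarrow> 2 \<le> gdist g y z"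
proof -
  assume e: "essential g x y z" and c: "conn g y z"
  obtain xs where p: "is_path g y z xs" and l: "length xs = Suc (gdist g y z)" using gdist_path[OF c] by blast
  have xin: "x \<in> set xs" and xy: "x \<noteq> y" and xz: "x \<noteq> z" using e p unfolding essential_def by auto
  obtain i where i: "i < length xs" "xs ! i = x" using xin by (metis in_set_conv_nth)
  have "i \<noteq> 0" proof assume "i = 0" then show False using i path_hd[OF p] xy by simp qed
  moreover have "i \<noteq> length xs - 1" using i path_last[OF p] xz by auto
  ultimately have "3 \<le> length xs" using i by linarith
  then show ?thesis using l by simp
qed

lemma ess_nbrs: "essential g x y z \<Longrightarrow> conn g y z \<Longrightarrow> \<exists>u v. u \<noteq> v \<and> {x, u} \<in> g \<and> {x, v} \<in> g"
proof -
  assume e: "essential g x y z" and c: "conn g y z"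
  obtain xs where p: "is_path g y z xs" using c unfolding conn_def by blast
  have xin: "x \<in> set xs" and xy: "x \<noteq> y" and xz: "x \<noteq> z" using e p unfolding essential_def by auto
  obtain i where i: "i < length xs" "xs ! i = x" using xin by (metis in_set_conv_nth)
  have i0: "i \<noteq> 0" proof assume "i = 0" then show False using i path_hd[OF p] xy by simp qed
  moreover have il: "i \<noteq> length xs - 1" using i path_last[OF p] xz by auto
  ultimately have i2: "Suc i < length xs" using i by linarith
  have d: "distinct xs" using p unfolding is_path_def by blast
  have e1: "{xs ! (i - 1), xs ! Suc (i - 1)} \<in> g" using path_edge[OF p, of "i - 1"] i i0 by simp
  have e2: "{xs ! i, xs ! Suc i} \<in> g" using path_edge[OF p i2] .
  have ne: "xs ! (i - 1) \<noteq> xs ! Suc i" using d i2 by (simp add: nth_eq_iff_index_eq)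
  have "Suc (i - 1) = i" using i0 by simp
  then show ?thesis using e1 e2 ne i(2) by (metis insert_commute)
qed


lemma path_mono: "g \<subseteq> g' \<Longrightarrow> is_path g y z xs \<Longrightarrow> is_path g' y z xs"
  unfolding is_path_def by blast

lemma conn_mono: "g \<subseteq> g' \<Longrightarrow> conn g y z \<Longrightarrow> conn g' y z"
  unfolding conn_def using path_mono by blast

lemma gdist_mono: "g \<subseteq> g' \<Longrightarrow> conn g y z \<Longrightarrow> gdist g' y z \<le> gdist g y z"
proof -
  assume s: "g \<subseteq> g'" and c: "conn g y z"
  obtain xs where p: "is_path g y z xs" and l: "length xs = Suc (gdist g y z)" using gdist_path[OF c] by blast
  show ?thesis using gdist_le[OF path_mono[OF s p]] l by simp
qed

lemma ess_mono: "g \<subseteq> g' \<Longrightarrow> essential g' x y z \<Longrightarrow> essential g x y z"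
  unfolding essential_def using path_mono by blast

lemma ess_set_mono: "g \<subseteq> g' \<Longrightarrow> ess_set n g' y z \<subseteq> ess_set n g y z"
  unfolding ess_set_def using ess_mono by blast

lemma ess_insert: "essential g i y z \<Longrightarrow> essential (insert {i, j} g) i y z"
proof -
  assume e: "essential g i y z"
  show ?thesis unfolding essential_def
  proof (intro conjI allI impI)
    show "i \<noteq> y" "i \<noteq> z" using e unfolding essential_def by auto
  next
    fix xs assume p: "is_path (insert {i, j} g) y z xs"
    show "i \<in> set xs"
    proof (cases "\<forall>k. Suc k < length xs \<longrightarrow> {xs ! k, xs ! Suc k} \<in> g")
      case True
      then have "is_path g y z xs" using p unfolding is_path_def by blast
      then show ?thesis using e unfolding essential_def by blast
    next
      case False
      then obtain k where k: "Suc k < length xs" "{xs ! k, xs ! Suc k} \<notin> g" by blast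
      then have "{xs ! k, xs ! Suc k} = {i, j}" using path_edge[OF p k(1)] by blast
      then have "i = xs ! k \<or> i = xs ! Suc k" by (metis insertCI insertE singletonD)
      then show ?thesis using k(1) by (metis Suc_lessD nth_mem)
    qed
  qed
qed

lemma finite_ess[simp]: "finite (ess_set n g y z)"
  unfolding ess_set_def by simp

definition V :: "(nat \<Rightarrow> real) \<Rightarrow> real \<Rightarrow> nat \<Rightarrow> nat set set \<Rightarrow> nat \<Rightarrow> nat \<Rightarrow> real" where
  "V b \<gamma> n g j w = (if conn g j w then (if 1 < gdist g j w then b (gdist g j w) else 0)
      - (if ess_set n g j w \<noteq> {} then \<gamma> * b (gdist g j w) else 0) else 0)"

definition Rt :: "(nat \<Rightarrow> real) \<Rightarrow> real \<Rightarrow> nat \<Rightarrow> nat set set \<Rightarrow> nat \<Rightarrow> nat \<times> nat \<Rightarrow> real" where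
  "Rt b \<gamma> n g j p = (case p of (y, z) \<Rightarrow> if y < z \<and> conn g y z \<and> j \<in> ess_set n g y z
      then \<gamma> / real (card (ess_set n g y z)) * 2 * b (gdist g y z) else 0)"

lemma util_eq: "util b c \<gamma> n g j = real (deg g j) * (b 1 - c) + (\<Sum>w<n. V b \<gamma> n g j w)
   + (\<Sum>p\<in>{..<n}\<times>{..<n}. Rt b \<gamma> n g j p)"
proof -
  have s1: "(\<Sum>w\<in>{w. w < n \<and> conn g j w \<and> gdist g j w > 1}. b (gdist g j w))
     = (\<Sum>w<n. if conn g j w \<and> gdist g j w > 1 then b (gdist g j w) else 0)"
  proof -
    have e: "{w. w < n \<and> conn g j w \<and> gdist g j w > 1} = {w \<in> {..<n}. conn g j w \<and> gdist g j w > 1}" by auto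
    show ?thesis unfolding e by (rule sum.inter_filter) simp
  qed
  have s2: "(\<Sum>w\<in>{w. w < n \<and> conn g j w \<and> ess_set n g j w \<noteq> {}}. \<gamma> * b (gdist g j w))
     = (\<Sum>w<n. if conn g j w \<and> ess_set n g j w \<noteq> {} then \<gamma> * b (gdist g j w) else 0)"
  proof -
    have e: "{w. w < n \<and> conn g j w \<and> ess_set n g j w \<noteq> {}} = {w \<in> {..<n}. conn g j w \<and> ess_set n g j w \<noteq> {}}" by auto
    show ?thesis unfolding e by (rule sum.inter_filter) simp
  qed
  have s3: "(\<Sum>(y,z)\<in>{(y,z). y < n \<and> z < n \<and> y < z \<and> conn g y z \<and> j \<in> ess_set n g y z}.
        \<gamma> / real (card (ess_set n g y z)) * 2 * b (gdist g y z))
     = (\<Sum>p\<in>{..<n}\<times>{..<n}. Rt b \<gamma> n g j p)"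
  proof -
    have e: "{(y,z). y < n \<and> z < n \<and> y < z \<and> conn g y z \<and> j \<in> ess_set n g y z}
       = {p \<in> {..<n}\<times>{..<n}. case p of (y,z) \<Rightarrow> y < z \<and> conn g y z \<and> j \<in> ess_set n g y z}" by auto
    have "(\<Sum>(y,z)\<in>{(y,z). y < n \<and> z < n \<and> y < z \<and> conn g y z \<and> j \<in> ess_set n g y z}.
        \<gamma> / real (card (ess_set n g y z)) * 2 * b (gdist g y z))
      = (\<Sum>p\<in>{..<n}\<times>{..<n}. if (case p of (y,z) \<Rightarrow> y < z \<and> conn g y z \<and> j \<in> ess_set n g y z)
           then (case p of (y,z) \<Rightarrow> \<gamma> / real (card (ess_set n g y z)) * 2 * b (gdist g y z)) else 0)"
      unfolding e by (rule sum.inter_filter) simp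
    also have "\<dots> = (\<Sum>p\<in>{..<n}\<times>{..<n}. Rt b \<gamma> n g j p)"
      by (rule sum.cong[OF refl]) (simp add: Rt_def split: prod.splits)
    finally show ?thesis .
  qed
  have "(\<Sum>w<n. V b \<gamma> n g j w) = (\<Sum>w<n. if conn g j w \<and> gdist g j w > 1 then b (gdist g j w) else 0)
       - (\<Sum>w<n. if conn g j w \<and> ess_set n g j w \<noteq> {} then \<gamma> * b (gdist g j w) else 0)"
    unfolding sum_subtractf[symmetric] by (rule sum.cong) (auto simp: V_def)
  then show ?thesis unfolding util_def s1 s2 s3 by simp
qed


lemma graph_on_edge: "graph_on n g \<Longrightarrow> {x, y} \<in> g \<Longrightarrow> x < n \<and> y < n \<and> x \<noteq> y"
  unfolding graph_on_def by (metis doubleton_eq_iff)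

lemma deg_finite: "graph_on n g \<Longrightarrow> finite {k. k \<noteq> i \<and> {i, k} \<in> g}"
proof -
  assume "graph_on n g"
  then have "{k. k \<noteq> i \<and> {i, k} \<in> g} \<subseteq> {..<n}" using graph_on_edge by blast
  then show ?thesis using finite_subset by blast
qed

lemma deg_insert: "graph_on n g \<Longrightarrow> i \<noteq> j \<Longrightarrow> {i, j} \<notin> g \<Longrightarrow> deg (insert {i, j} g) i = Suc (deg g i)"
proof -
  assume G: "graph_on n g" and ne: "i \<noteq> j" and nj: "{i, j} \<notin> g"
  have "{k. k \<noteq> i \<and> {i, k} \<in> insert {i, j} g} = insert j {k. k \<noteq> i \<and> {i, k} \<in> g}"
    using ne by (auto simp: doubleton_eq_iff)
  moreover have "j \<notin> {k. k \<noteq> i \<and> {i, k} \<in> g}" using nj by simp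
  ultimately show ?thesis unfolding deg_def using deg_finite[OF G, of i] by simp
qed

lemma graph_on_insert: "graph_on n g \<Longrightarrow> i < n \<Longrightarrow> j < n \<Longrightarrow> i \<noteq> j \<Longrightarrow> graph_on n (insert {i, j} g)"
  unfolding graph_on_def by blast

lemma graph_on_diff: "graph_on n g \<Longrightarrow> graph_on n (g - h)"
  unfolding graph_on_def by blast

locale bs =
  fixes b :: "nat \<Rightarrow> real" and \<gamma> :: real
  assumes bdec: "\<forall>i\<ge>1. b (Suc i) < b i"
    and bpos: "\<forall>i\<ge>1. 0 < b i"
    and g0: "0 \<le> \<gamma>" and g1: "\<gamma> < 1"
begin

lemma b_anti: assumes "1 \<le> m" "m \<le> m'" shows "b m' \<le> b m"
  using assms(2)
proof (induction m' rule: dec_induct)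
  case base then show ?case by simp
next
  case (step k)
  then have "b (Suc k) < b k" using bdec assms(1) by simp
  then show ?case using step by simp
qed

lemma b_strict: "1 \<le> m \<Longrightarrow> m < m' \<Longrightarrow> b m' < b m"
proof -
  assume "1 \<le> m" "m < m'"
  then have "b (Suc m) < b m" "b m' \<le> b (Suc m)" using bdec b_anti[of "Suc m" m'] by auto
  then show ?thesis by simp
qed

lemma bpos': "1 \<le> m \<Longrightarrow> 0 < b m" using bpos by simp

lemma V_refl: "V b \<gamma> n g j j = 0"
  unfolding V_def ess_set_def by (auto dest: ess_dist)

lemma V_nconn: "\<not> conn g j w \<Longrightarrow> V b \<gamma> n g j w = 0"
  unfolding V_def by simp

lemma ess_set_dist: "conn g j w \<Longrightarrow> ess_set n g j w \<noteq> {} \<Longrightarrow> 2 \<le> gdist g j w"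
  unfolding ess_set_def using ess_dist by blast

lemma V_adj: "{j, w} \<in> g \<Longrightarrow> j \<noteq> w \<Longrightarrow> V b \<gamma> n g j w = 0"
proof -
  assume e: "{j, w} \<in> g" and ne: "j \<noteq> w"
  have c: "conn g j w" using conn_edge[OF e] .
  have d: "gdist g j w = 1" using gdist_edge[OF e ne] .
  then have "ess_set n g j w = {}" using ess_set_dist[OF c] by force
  then show ?thesis using c d unfolding V_def by simp
qed

lemma V_nonneg: "0 \<le> V b \<gamma> n g j w"
proof (cases "conn g j w")
  case False then show ?thesis by (simp add: V_nconn)
next
  case c: True
  show ?thesis
  proof (cases "ess_set n g j w = {}")
    case True
    then show ?thesis using c bpos'[of "gdist g j w"] unfolding V_def by auto
  next
    case False
    then have d: "2 \<le> gdist g j w" using ess_set_dist[OF c] by blast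
    then have "0 < b (gdist g j w)" using bpos by simp
    then have "0 \<le> (1 - \<gamma>) * b (gdist g j w)" using g1 by simp
    then show ?thesis using c d False unfolding V_def by (simp add: algebra_simps)
  qed
qed

lemma V_val: "conn g j w \<Longrightarrow> 2 \<le> gdist g j w \<Longrightarrow>
   V b \<gamma> n g j w = (if ess_set n g j w \<noteq> {} then 1 - \<gamma> else 1) * b (gdist g j w)"
  unfolding V_def by (auto simp: algebra_simps)

lemma V_upper: "1 \<le> m \<Longrightarrow> (conn g j w \<Longrightarrow> m \<le> gdist g j w) \<Longrightarrow> V b \<gamma> n g j w \<le> b m"
proof (cases "conn g j w")
  case False
  assume "1 \<le> m" then show ?thesis using False bpos'[of m] by (simp add: V_nconn)
next
  case c: True
  assume m: "1 \<le> m" "conn g j w \<Longrightarrow> m \<le> gdist g j w"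
  then have md: "m \<le> gdist g j w" using c by blast
  show ?thesis
  proof (cases "2 \<le> gdist g j w")
    case True
    have "V b \<gamma> n g j w \<le> b (gdist g j w)"
      using V_val[OF c True] bpos True g0 by (auto simp: algebra_simps)
    also have "\<dots> \<le> b m" using b_anti[OF m(1) md] .
    finally show ?thesis .
  next
    case False
    then have "ess_set n g j w = {}" using ess_set_dist[OF c] by blast
    then have "V b \<gamma> n g j w = 0" using False c unfolding V_def by simp
    then show ?thesis using bpos'[OF m(1)] by simp
  qed
qed

lemma V_upper_ess: "1 \<le> m \<Longrightarrow> conn g j w \<Longrightarrow> m \<le> gdist g j w \<Longrightarrow> ess_set n g j w \<noteq> {} \<Longrightarrow>
   V b \<gamma> n g j w \<le> (1 - \<gamma>) * b m"
proof -
  assume m: "1 \<le> m" and c: "conn g j w" and md: "m \<le> gdist g j w" and e: "ess_set n g j w \<noteq> {}"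
  have d: "2 \<le> gdist g j w" using ess_set_dist[OF c e] .
  have "V b \<gamma> n g j w = (1 - \<gamma>) * b (gdist g j w)" using V_val[OF c d] e by simp
  also have "\<dots> \<le> (1 - \<gamma>) * b m" using b_anti[OF m md] g1 by (simp add: mult_left_mono)
  finally show ?thesis .
qed

lemma V_mono: "g \<subseteq> g' \<Longrightarrow> (conn g j w \<Longrightarrow> 2 \<le> gdist g j w \<Longrightarrow> 2 \<le> gdist g' j w) \<Longrightarrow>
   V b \<gamma> n g j w \<le> V b \<gamma> n g' j w"
proof -
  assume s: "g \<subseteq> g'" and h: "conn g j w \<Longrightarrow> 2 \<le> gdist g j w \<Longrightarrow> 2 \<le> gdist g' j w"
  show ?thesis
  proof (cases "conn g j w \<and> 2 \<le> gdist g j w")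
    case False
    then have "V b \<gamma> n g j w = 0"
    proof (cases "conn g j w")
      case True
      with False have "\<not> 2 \<le> gdist g j w" by blast
      then have "ess_set n g j w = {}" using ess_set_dist[OF True] by blast
      then show ?thesis using False True unfolding V_def by simp
    qed (simp add: V_nconn)
    then show ?thesis using V_nonneg by simp
  next
    case True
    then have c: "conn g j w" and d: "2 \<le> gdist g j w" by auto
    have c': "conn g' j w" using conn_mono[OF s c] .
    have d': "2 \<le> gdist g' j w" using h c d by blast
    have dd: "gdist g' j w \<le> gdist g j w" using gdist_mono[OF s c] .
    have bb: "b (gdist g j w) \<le> b (gdist g' j w)" using b_anti[of "gdist g' j w" "gdist g j w"] d' dd by simp
    have es: "ess_set n g' j w \<subseteq> ess_set n g j w" using ess_set_mono[OF s] .
    have f: "(if ess_set n g j w \<noteq> {} then 1 - \<gamma> else 1) \<le> (if ess_set n g' j w \<noteq> {} then 1 - \<gamma> else (1::real))"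
      using es g0 by auto
    have p: "0 \<le> b (gdist g j w)" using bpos'[of "gdist g j w"] d by simp
    have "0 \<le> (if ess_set n g' j w \<noteq> {} then 1 - \<gamma> else (1::real))" using g1 by simp
    then have "(if ess_set n g j w \<noteq> {} then 1 - \<gamma> else 1) * b (gdist g j w)
       \<le> (if ess_set n g' j w \<noteq> {} then 1 - \<gamma> else 1) * b (gdist g' j w)"
      using f bb p by (intro mult_mono) auto
    then show ?thesis using V_val[OF c d] V_val[OF c' d'] by simp
  qed
qed

lemma Rt_nonneg: "0 \<le> Rt b \<gamma> n g j p"
proof -
  obtain y z where p: "p = (y, z)" by (cases p)
  show ?thesis
  proof (cases "y < z \<and> conn g y z \<and> j \<in> ess_set n g y z")
    case True
    then have "1 \<le> gdist g y z" using gdist_pos by auto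
    then have "0 < b (gdist g y z)" using bpos by simp
    then show ?thesis using True p g0 unfolding Rt_def by simp
  next
    case False then show ?thesis using p unfolding Rt_def by auto
  qed
qed

lemma Rt_mono_ins: "Rt b \<gamma> n g i p \<le> Rt b \<gamma> n (insert {i, j} g) i p"
proof -
  obtain y z where p: "p = (y, z)" by (cases p)
  let ?g' = "insert {i, j} g"
  show ?thesis
  proof (cases "y < z \<and> conn g y z \<and> i \<in> ess_set n g y z")
    case False
    then have "Rt b \<gamma> n g i p = 0" using p unfolding Rt_def by auto
    then show ?thesis using Rt_nonneg[of n ?g' i p] by simp
  next
    case True
    have s: "g \<subseteq> ?g'" by auto
    have yz: "y < z" and c: "conn g y z" and ie: "i < n" "essential g i y z" using True unfolding ess_set_def by auto
    have c': "conn ?g' y z" using conn_mono[OF s c] .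
    have ie': "i \<in> ess_set n ?g' y z" using ie ess_insert unfolding ess_set_def by blast
    have es: "ess_set n ?g' y z \<subseteq> ess_set n g y z" using ess_set_mono[OF s] .
    have cd: "card (ess_set n ?g' y z) \<le> card (ess_set n g y z)" using card_mono[OF _ es] by simp
    have cp: "0 < card (ess_set n ?g' y z)" using ie' by (auto simp: card_gt_0_iff)
    have d1: "1 \<le> gdist ?g' y z" using gdist_pos[OF c'] yz by simp
    have dd: "gdist ?g' y z \<le> gdist g y z" using gdist_mono[OF s c] .
    have bb: "b (gdist g y z) \<le> b (gdist ?g' y z)" using b_anti[OF d1 dd] .
    have bp: "0 \<le> b (gdist g y z)" using bpos'[of "gdist g y z"] d1 dd by simp
    have q: "\<gamma> / real (card (ess_set n g y z)) \<le> \<gamma> / real (card (ess_set n ?g' y z))"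
      using cd cp g0 by (intro divide_left_mono) auto
    have "\<gamma> / real (card (ess_set n g y z)) * 2 * b (gdist g y z) \<le> \<gamma> / real (card (ess_set n ?g' y z)) * 2 * b (gdist ?g' y z)"
      using q bb bp g0 by (intro mult_mono) auto
    then show ?thesis using True p yz c' ie' unfolding Rt_def by simp
  qed
qed


lemma add_link:
  assumes G: "graph_on n g" and i: "i < n" and j: "j < n" and ne: "i \<noteq> j" and nj: "{i, j} \<notin> g"
  shows "util b c \<gamma> n g i + (b 1 - c) - V b \<gamma> n g i j \<le> util b c \<gamma> n (insert {i, j} g) i"
proof -
  let ?g' = "insert {i, j} g"
  have s: "g \<subseteq> ?g'" by auto
  have fin: "finite {..<n}" by simp
  have jn: "j \<in> {..<n}" using j by simp
  have A: "(\<Sum>w<n. V b \<gamma> n g i w) = V b \<gamma> n g i j + (\<Sum>w\<in>{..<n} - {j}. V b \<gamma> n g i w)"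
    using sum.remove[OF fin jn] by simp
  have B: "(\<Sum>w<n. V b \<gamma> n ?g' i w) = V b \<gamma> n ?g' i j + (\<Sum>w\<in>{..<n} - {j}. V b \<gamma> n ?g' i w)"
    using sum.remove[OF fin jn] by simp
  have B0: "V b \<gamma> n ?g' i j = 0" using V_adj[of i j ?g'] ne by simp
  have C: "(\<Sum>w\<in>{..<n} - {j}. V b \<gamma> n g i w) \<le> (\<Sum>w\<in>{..<n} - {j}. V b \<gamma> n ?g' i w)"
  proof (rule sum_mono)
    fix w assume w: "w \<in> {..<n} - {j}"
    show "V b \<gamma> n g i w \<le> V b \<gamma> n ?g' i w"
    proof (rule V_mono[OF s])
      assume c: "conn g i w" and d: "2 \<le> gdist g i w"
      have iw: "i \<noteq> w" using d by auto
      have c': "conn ?g' i w" using conn_mono[OF s c] .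
      have d1: "1 \<le> gdist ?g' i w" using gdist_pos[OF c' iw] .
      have "gdist ?g' i w \<noteq> 1"
      proof
        assume "gdist ?g' i w = 1"
        then have e: "{i, w} \<in> ?g'" using gdist_one_edge[OF c'] by blast
        have "{i, w} \<noteq> {i, j}" using w iw by (auto simp: doubleton_eq_iff)
        then have "{i, w} \<in> g" using e by blast
        then have "gdist g i w = 1" using gdist_edge iw by blast
        then show False using d by simp
      qed
      then show "2 \<le> gdist ?g' i w" using d1 by simp
    qed
  qed
  have R: "(\<Sum>p\<in>{..<n}\<times>{..<n}. Rt b \<gamma> n g i p) \<le> (\<Sum>p\<in>{..<n}\<times>{..<n}. Rt b \<gamma> n ?g' i p)"
    by (rule sum_mono) (rule Rt_mono_ins)
  have D: "deg ?g' i = Suc (deg g i)" using deg_insert[OF G ne nj] .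
  show ?thesis unfolding util_eq D using A B B0 C R by (simp add: algebra_simps)
qed

lemma V_le_b2: "graph_on n g \<Longrightarrow> i \<noteq> j \<Longrightarrow> {i, j} \<notin> g \<Longrightarrow> V b \<gamma> n g i j \<le> b 2"
proof (rule V_upper)
  assume G: "graph_on n g" and ne: "i \<noteq> j" and nj: "{i, j} \<notin> g" and c: "conn g i j"
  have "1 \<le> gdist g i j" using gdist_pos[OF c ne] .
  moreover have "gdist g i j \<noteq> 1" using gdist_one_edge[OF c] nj by blast
  ultimately show "2 \<le> gdist g i j" by simp
qed simp

end

lemma no_conn_iso: "y \<noteq> z \<Longrightarrow> (\<forall>u. {u, z} \<notin> g) \<Longrightarrow> \<not> conn g y z"
  unfolding conn_def using path_last_edge by blast


definition Wset :: "nat \<Rightarrow> nat set set \<Rightarrow> nat \<Rightarrow> nat set" where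
  "Wset n g j = {w. w < n \<and> conn g j w \<and> gdist g j w > 1}"

definition Nset :: "nat set set \<Rightarrow> nat \<Rightarrow> nat set" where
  "Nset g j = {k. k \<noteq> j \<and> {j, k} \<in> g}"

definition Cset :: "nat \<Rightarrow> nat set set \<Rightarrow> nat \<Rightarrow> nat set" where
  "Cset n g j = {w. w < n \<and> conn g j w}"

lemma welfare_eq: "welfare b c n g = (\<Sum>j<n. real (card (Nset g j)) * (b 1 - c) + (\<Sum>w\<in>Wset n g j. b (gdist g j w)))"
  unfolding welfare_def Wset_def Nset_def deg_def by simp

lemma NW_card: "graph_on n g \<Longrightarrow> j < n \<Longrightarrow> card (Nset g j) + card (Wset n g j) \<le> card (Cset n g j) - 1"
proof -
  assume G: "graph_on n g" and j: "j < n"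
  have f: "finite (Cset n g j)" unfolding Cset_def by simp
  have jc: "j \<in> Cset n g j" unfolding Cset_def using j by simp
  have sub: "Nset g j \<union> Wset n g j \<subseteq> Cset n g j - {j}"
  proof
    fix w assume w: "w \<in> Nset g j \<union> Wset n g j"
    show "w \<in> Cset n g j - {j}"
    proof (cases "w \<in> Nset g j")
      case True
      then have "{j, w} \<in> g" "w \<noteq> j" unfolding Nset_def by auto
      then show ?thesis unfolding Cset_def using graph_on_edge[OF G] conn_edge by blast
    next
      case False
      then have "w \<in> Wset n g j" using w by blast
      then have "w < n" "conn g j w" "gdist g j w > 1" unfolding Wset_def by auto
      then show ?thesis unfolding Cset_def by auto
    qed
  qed
  have disj: "Nset g j \<inter> Wset n g j = {}"
  proof -
    { fix w assume "w \<in> Nset g j" "w \<in> Wset n g j"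
      then have "gdist g j w = 1" "gdist g j w > 1" unfolding Nset_def Wset_def using gdist_edge by auto
      then have False by simp }
    then show ?thesis by blast
  qed
  have fN: "finite (Nset g j)" and fW: "finite (Wset n g j)"
    using sub f finite_subset by blast+
  have "card (Nset g j) + card (Wset n g j) = card (Nset g j \<union> Wset n g j)"
    using card_Un_disjoint[OF fN fW disj] by simp
  also have "\<dots> \<le> card (Cset n g j - {j})" using card_mono[OF _ sub] f by simp
  also have "\<dots> = card (Cset n g j) - 1" using jc f by simp
  finally show ?thesis .
qed

lemma Cset_le: "card (Cset n g j) \<le> n"
proof -
  have "Cset n g j \<subseteq> {..<n}" unfolding Cset_def by auto
  then show ?thesis using card_mono[of "{..<n}"] by fastforce
qed

context bs begin

lemma W_sum_le: "(\<Sum>w\<in>Wset n g j. b (gdist g j w)) \<le> real (card (Wset n g j)) * b 2"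
proof -
  have "(\<Sum>w\<in>Wset n g j. b (gdist g j w)) \<le> (\<Sum>w\<in>Wset n g j. b 2)"
    by (rule sum_mono) (auto simp: Wset_def intro: b_anti)
  then show ?thesis by simp
qed

lemma node_bound: "graph_on n g \<Longrightarrow> j < n \<Longrightarrow>
  real (card (Nset g j)) * (b 1 - c) + (\<Sum>w\<in>Wset n g j. b (gdist g j w))
   \<le> real (card (Nset g j)) * (b 1 - c) + real (card (Cset n g j) - 1 - card (Nset g j)) * b 2"
proof -
  assume G: "graph_on n g" and j: "j < n"
  have "card (Wset n g j) \<le> card (Cset n g j) - 1 - card (Nset g j)" using NW_card[OF G j] by simp
  then have "real (card (Wset n g j)) * b 2 \<le> real (card (Cset n g j) - 1 - card (Nset g j)) * b 2"
    using bpos'[of 2] by (intro mult_right_mono) auto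
  then show ?thesis using W_sum_le[where n=n and g=g and j=j] by simp
qed

lemma ps_complete:
  assumes cc: "c < b 1 - b 2" and G: "graph_on n g" and ps: "pairwise_stable b c \<gamma> n g"
    and i: "i < n" and j: "j < n" and ne: "i \<noteq> j"
  shows "{i, j} \<in> g"
proof (rule ccontr)
  assume nj: "{i, j} \<notin> g"
  have nj': "{j, i} \<notin> g" using nj by (simp add: insert_commute)
  have eq: "insert {j, i} g = insert {i, j} g" by (simp add: insert_commute)
  have "util b c \<gamma> n g i + (b 1 - c) - V b \<gamma> n g i j \<le> util b c \<gamma> n (insert {i, j} g) i"
    using add_link[OF G i j ne nj] .
  moreover have "V b \<gamma> n g i j \<le> b 2" using V_le_b2[OF G ne nj] .
  ultimately have I: "util b c \<gamma> n g i < util b c \<gamma> n (insert {i, j} g) i" using cc by simp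
  have "util b c \<gamma> n g j + (b 1 - c) - V b \<gamma> n g j i \<le> util b c \<gamma> n (insert {i, j} g) j"
    using add_link[OF G j i ne[symmetric] nj'] eq by simp
  moreover have "V b \<gamma> n g j i \<le> b 2" using V_le_b2[OF G ne[symmetric] nj'] .
  ultimately have J: "util b c \<gamma> n g j < util b c \<gamma> n (insert {i, j} g) j" using cc by simp
  have P: "\<forall>i j. i < n \<and> j < n \<and> i \<noteq> j \<and> {i, j} \<notin> g \<longrightarrow>
        util b c \<gamma> n g i < util b c \<gamma> n (insert {i, j} g) i \<longrightarrow>
        util b c \<gamma> n (insert {i, j} g) j < util b c \<gamma> n g j"
    using ps unfolding pairwise_stable_def by (rule conjunct2)
  have "util b c \<gamma> n (insert {i, j} g) j < util b c \<gamma> n g j"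
    using P[rule_format, of i j] i j ne nj I by blast
  then show False using J by simp
qed

lemma complete_efficient:
  assumes cc: "b 2 \<le> b 1 - c" and G: "graph_on n g" and comp: "\<forall>i<n. \<forall>j<n. i \<noteq> j \<longrightarrow> {i, j} \<in> g"
  shows "efficient b c n g"
proof -
  have wg: "welfare b c n g = real n * (real n - 1) * (b 1 - c)"
  proof -
    have "\<And>j. j < n \<Longrightarrow> real (card (Nset g j)) * (b 1 - c) + (\<Sum>w\<in>Wset n g j. b (gdist g j w)) = (real n - 1) * (b 1 - c)"
    proof -
      fix j assume j: "j < n"
      have "Nset g j = {..<n} - {j}"
      proof
        show "Nset g j \<subseteq> {..<n} - {j}" unfolding Nset_def using graph_on_edge[OF G] by blast
        show "{..<n} - {j} \<subseteq> Nset g j" unfolding Nset_def using comp j by blast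
      qed
      then have N: "card (Nset g j) = n - 1" using j by simp
      have "Wset n g j = {}"
      proof -
        { fix w assume "w \<in> Wset n g j"
          then have w: "w < n" "gdist g j w > 1" unfolding Wset_def by auto
          then have "w \<noteq> j" by auto
          then have "gdist g j w = 1" using comp w j gdist_edge by blast
          then have False using w by simp }
        then show ?thesis by blast
      qed
      then show "real (card (Nset g j)) * (b 1 - c) + (\<Sum>w\<in>Wset n g j. b (gdist g j w)) = (real n - 1) * (b 1 - c)"
        using N j by (simp add: of_nat_diff)
    qed
    then have "welfare b c n g = (\<Sum>j<n. (real n - 1) * (b 1 - c))" unfolding welfare_eq by (rule sum.cong[OF refl]) simp
    then show ?thesis by simp
  qed
  show ?thesis unfolding efficient_def
  proof (intro conjI allI impI)
    show "graph_on n g" using G .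
  next
    fix g' assume G': "graph_on n g'"
    have "\<And>j. j < n \<Longrightarrow> real (card (Nset g' j)) * (b 1 - c) + (\<Sum>w\<in>Wset n g' j. b (gdist g' j w)) \<le> (real n - 1) * (b 1 - c)"
    proof -
      fix j assume j: "j < n"
      have k: "card (Nset g' j) + (card (Cset n g' j) - 1 - card (Nset g' j)) \<le> n - 1"
        using NW_card[OF G' j] Cset_le[of n g' j] by linarith
      have "real (card (Nset g' j)) * (b 1 - c) + (\<Sum>w\<in>Wset n g' j. b (gdist g' j w))
         \<le> real (card (Nset g' j)) * (b 1 - c) + real (card (Cset n g' j) - 1 - card (Nset g' j)) * b 2"
        using node_bound[OF G' j] .
      also have "\<dots> \<le> real (card (Nset g' j)) * (b 1 - c) + real (card (Cset n g' j) - 1 - card (Nset g' j)) * (b 1 - c)"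
        using cc by (simp add: mult_left_mono)
      also have "\<dots> = real (card (Nset g' j) + (card (Cset n g' j) - 1 - card (Nset g' j))) * (b 1 - c)"
        by (simp add: algebra_simps)
      also have "\<dots> \<le> real (n - 1) * (b 1 - c)"
        using k cc bpos'[of 2] by (intro mult_right_mono) auto
      finally show "real (card (Nset g' j)) * (b 1 - c) + (\<Sum>w\<in>Wset n g' j. b (gdist g' j w)) \<le> (real n - 1) * (b 1 - c)"
        using j by (simp add: of_nat_diff)
    qed
    then have "welfare b c n g' \<le> (\<Sum>j<n. (real n - 1) * (b 1 - c))" unfolding welfare_eq by (rule sum_mono) simp
    then show "welfare b c n g' \<le> welfare b c n g" using wg by simp
  qed
qed

end


lemma uniq_nb_first: "is_path g y z xs \<Longrightarrow> y \<noteq> z \<Longrightarrow> (\<forall>v. {y, v} \<in> g \<longrightarrow> v = u) \<Longrightarrow> xs ! 1 = u"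
  using path_first_edge by blast

lemma uniq_nb_last: "is_path g y z xs \<Longrightarrow> y \<noteq> z \<Longrightarrow> (\<forall>v. {v, z} \<in> g \<longrightarrow> v = u) \<Longrightarrow> xs ! (length xs - 2) = u"
  using path_last_edge by blast

lemma uniq_ess: "y \<noteq> z \<Longrightarrow> u \<noteq> y \<Longrightarrow> u \<noteq> z \<Longrightarrow> (\<forall>v. {y, v} \<in> g \<longrightarrow> v = u) \<Longrightarrow> essential g u y z"
  unfolding essential_def
proof (intro conjI allI impI)
  fix xs assume p: "is_path g y z xs" and yz: "y \<noteq> z" and h: "\<forall>v. {y, v} \<in> g \<longrightarrow> v = u"
  have "xs ! 1 = u" using uniq_nb_first[OF p yz h] .
  moreover have "1 < length xs" using path_len2[OF p yz] by simp
  ultimately show "u \<in> set xs" by (metis nth_mem)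
qed

lemma uniq_ess_last: "y \<noteq> z \<Longrightarrow> u \<noteq> y \<Longrightarrow> u \<noteq> z \<Longrightarrow> (\<forall>v. {v, z} \<in> g \<longrightarrow> v = u) \<Longrightarrow> essential g u y z"
  unfolding essential_def
proof (intro conjI allI impI)
  fix xs assume p: "is_path g y z xs" and yz: "y \<noteq> z" and h: "\<forall>v. {v, z} \<in> g \<longrightarrow> v = u"
  have "xs ! (length xs - 2) = u" using uniq_nb_last[OF p yz h] .
  moreover have "length xs - 2 < length xs" using path_len2[OF p yz] by simp
  ultimately show "u \<in> set xs" by (metis nth_mem)
qed

definition star :: "nat \<Rightarrow> nat \<Rightarrow> nat set set" where
  "star N ctr = {{ctr, k} | k. k < N \<and> k \<noteq> ctr}"

lemma star_edge: "ctr < N \<Longrightarrow> {x, y} \<in> star N ctr \<longleftrightarrow> x \<noteq> y \<and> x < N \<and> y < N \<and> (x = ctr \<or> y = ctr)"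
  unfolding star_def by (auto simp: doubleton_eq_iff)

lemma star_graph: "ctr < N \<Longrightarrow> graph_on N (star N ctr)"
  unfolding star_def graph_on_def by blast

lemma star_Suc: "ctr < n \<Longrightarrow> insert {n, ctr} (star n ctr) = star (Suc n) ctr"
  unfolding star_def by (auto simp: insert_commute less_Suc_eq)

lemma star_1: "star (Suc 0) 0 = {}"
  unfolding star_def by auto

lemma star_swap2: "ctr < 2 \<Longrightarrow> T < 2 \<Longrightarrow> T \<noteq> ctr \<Longrightarrow> insert {2, T} (star 2 ctr) = star 3 T"
proof -
  assume a: "ctr < 2" "T < 2" "T \<noteq> ctr"
  then have "ctr = 0 \<and> T = 1 \<or> ctr = 1 \<and> T = 0" by auto
  then show ?thesis
  proof
    assume h: "ctr = 0 \<and> T = 1"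
    have "star 2 0 = {{0,1}}" unfolding star_def by (auto simp: less_2_cases_iff)
    moreover have "star 3 1 = {{1,0},{1,2}}" unfolding star_def by (auto simp: eval_nat_numeral less_Suc_eq)
    ultimately show ?thesis using h by (auto simp: insert_commute)
  next
    assume h: "ctr = 1 \<and> T = 0"
    have "star 2 1 = {{1,0}}" unfolding star_def by (auto simp: less_2_cases_iff)
    moreover have "star 3 0 = {{0,1},{0,2}}" unfolding star_def by (auto simp: eval_nat_numeral less_Suc_eq)
    ultimately show ?thesis using h by (auto simp: insert_commute)
  qed
qed

lemma star_leaf_nb: "ctr < N \<Longrightarrow> x \<noteq> ctr \<Longrightarrow> {x, v} \<in> star N ctr \<Longrightarrow> v = ctr"
  using star_edge by blast

lemma star_Nset_leaf: "ctr < N \<Longrightarrow> i < N \<Longrightarrow> i \<noteq> ctr \<Longrightarrow> Nset (star N ctr) i = {ctr}"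
  unfolding Nset_def using star_edge by auto

lemma star_Nset_ctr: "ctr < N \<Longrightarrow> Nset (star N ctr) ctr = {..<N} - {ctr}"
  unfolding Nset_def using star_edge by auto

lemma star_path: "ctr < N \<Longrightarrow> y < N \<Longrightarrow> z < N \<Longrightarrow> \<exists>xs. is_path (star N ctr) y z xs \<and> set xs \<subseteq> {y, z, ctr}"
proof -
  assume c: "ctr < N" and y: "y < N" and z: "z < N"
  show ?thesis
  proof (cases "y = z")
    case True then show ?thesis by (intro exI[of _ "[y]"]) simp
  next
    case ne: False
    show ?thesis
    proof (cases "y = ctr \<or> z = ctr")
      case True
      then have "is_path (star N ctr) y z [y, z]" using ne c y z by (auto simp: is_path_Cons2 star_edge)
      then show ?thesis by (intro exI[of _ "[y, z]"]) simp
    next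
      case False
      then have "is_path (star N ctr) y z [y, ctr, z]" using ne c y z
        by (auto simp: is_path_Cons2 star_edge)
      then show ?thesis by (intro exI[of _ "[y, ctr, z]"]) simp
    qed
  qed
qed

lemma not_ess_star: "ctr < N \<Longrightarrow> star N ctr \<subseteq> g \<Longrightarrow> y < N \<Longrightarrow> z < N \<Longrightarrow> i \<noteq> ctr \<Longrightarrow> \<not> essential g i y z"
proof
  assume c: "ctr < N" and s: "star N ctr \<subseteq> g" and y: "y < N" and z: "z < N" and i: "i \<noteq> ctr"
    and e: "essential g i y z"
  obtain xs where p: "is_path (star N ctr) y z xs" and st: "set xs \<subseteq> {y, z, ctr}" using star_path[OF c y z] by blast
  have "i \<in> set xs" using e path_mono[OF s p] unfolding essential_def by blast
  then show False using st e i unfolding essential_def by auto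
qed

lemma sum_if_const: "finite A \<Longrightarrow> (\<Sum>w\<in>A. if P w then k else 0) = real (card {w\<in>A. P w}) * (k::real)"
  by (simp add: sum.inter_filter[symmetric])


lemma deg_Nset: "deg g j = card (Nset g j)"
  unfolding deg_def Nset_def by simp

lemma card_minus2: "a < N \<Longrightarrow> d < N \<Longrightarrow> a \<noteq> d \<Longrightarrow> card {w \<in> {..<N}. w \<noteq> a \<and> w \<noteq> d} = N - 2"
proof -
  assume h: "a < N" "d < N" "a \<noteq> d"
  have "{w \<in> {..<N}. w \<noteq> a \<and> w \<noteq> d} = {..<N} - {a, d}" by auto
  moreover have "card ({..<N} - {a, d}) = N - 2" using h by (subst card_Diff_subset) auto
  ultimately show ?thesis by simp
qed

lemma card_minus3: "a < N \<Longrightarrow> d < N \<Longrightarrow> e < N \<Longrightarrow> a \<noteq> d \<Longrightarrow> a \<noteq> e \<Longrightarrow> d \<noteq> e \<Longrightarrow>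
   card {w \<in> {..<N}. w \<noteq> a \<and> w \<noteq> d \<and> w \<noteq> e} = N - 3"
proof -
  assume h: "a < N" "d < N" "e < N" "a \<noteq> d" "a \<noteq> e" "d \<noteq> e"
  have "{w \<in> {..<N}. w \<noteq> a \<and> w \<noteq> d \<and> w \<noteq> e} = {..<N} - {a, d, e}" by auto
  moreover have "card ({..<N} - {a, d, e}) = N - 3" using h by (subst card_Diff_subset) auto
  ultimately show ?thesis by simp
qed

context bs begin

lemma Rt_zero: "(\<And>y z. y < n \<Longrightarrow> z < n \<Longrightarrow> conn g y z \<Longrightarrow> \<not> essential g i y z) \<Longrightarrow>
   (\<Sum>p\<in>{..<n}\<times>{..<n}. Rt b \<gamma> n g i p) = 0"
  by (rule sum.neutral) (auto simp: Rt_def ess_set_def)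

lemma star_leaf_pair:
  assumes c: "ctr < N" and i: "i < N" "i \<noteq> ctr" and w: "w < N" "w \<noteq> ctr" and iw: "i \<noteq> w"
  shows "conn (star N ctr) i w \<and> gdist (star N ctr) i w = 2 \<and> ctr \<in> ess_set N (star N ctr) i w"
proof -
  let ?S = "star N ctr"
  have p: "is_path ?S i w [i, ctr, w]" using c i w iw by (auto simp: is_path_Cons2 star_edge)
  have cn: "conn ?S i w" using p unfolding conn_def by blast
  have "gdist ?S i w \<le> 2" using gdist_le[OF p] by simp
  moreover have "1 \<le> gdist ?S i w" using gdist_pos[OF cn iw] .
  moreover have "gdist ?S i w \<noteq> 1" using gdist_one_edge[OF cn] star_edge[OF c] i w by blast
  ultimately have d: "gdist ?S i w = 2" by simp
  have "essential ?S ctr i w" using uniq_ess[OF iw] i w star_leaf_nb[OF c i(2)] by auto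
  then show ?thesis using cn d c unfolding ess_set_def by simp
qed

lemma util_star_leaf:
  assumes c: "ctr < N" and i: "i < N" "i \<noteq> ctr"
  shows "util b c' \<gamma> N (star N ctr) i = (b 1 - c') + real (N - 2) * ((1 - \<gamma>) * b 2)"
proof -
  let ?S = "star N ctr"
  have D: "deg ?S i = 1" unfolding deg_Nset using star_Nset_leaf[OF c i] by simp
  have V: "(\<Sum>w<N. V b \<gamma> N ?S i w) = (\<Sum>w<N. if w \<noteq> i \<and> w \<noteq> ctr then (1 - \<gamma>) * b 2 else 0)"
  proof (rule sum.cong[OF refl])
    fix w assume w: "w \<in> {..<N}"
    show "V b \<gamma> N ?S i w = (if w \<noteq> i \<and> w \<noteq> ctr then (1 - \<gamma>) * b 2 else 0)"
    proof (cases "w = i")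
      case True then show ?thesis by (simp add: V_refl)
    next
      case wi: False
      show ?thesis
      proof (cases "w = ctr")
        case True
        have "{i, ctr} \<in> ?S" using c i star_edge by blast
        then show ?thesis using True V_adj[of i ctr ?S] i by simp
      next
        case False
        have h: "conn ?S i w" "gdist ?S i w = 2" "ctr \<in> ess_set N ?S i w"
          using star_leaf_pair[OF c i _ False] w wi by auto
        then have "V b \<gamma> N ?S i w = (1 - \<gamma>) * b 2" using V_val[OF h(1)] by auto
        then show ?thesis using wi False by simp
      qed
    qed
  qed
  have V2: "(\<Sum>w<N. if w \<noteq> i \<and> w \<noteq> ctr then (1 - \<gamma>) * b 2 else 0) = real (N - 2) * ((1 - \<gamma>) * b 2)"
    using sum_if_const[of "{..<N}" "\<lambda>w. w \<noteq> i \<and> w \<noteq> ctr"] card_minus2[OF i(1) c i(2)] by simp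
  have R: "(\<Sum>p\<in>{..<N}\<times>{..<N}. Rt b \<gamma> N ?S i p) = 0"
    by (rule Rt_zero) (use not_ess_star[OF c _ _ _ i(2)] in blast)
  show ?thesis unfolding util_eq D V V2 R by simp
qed

lemma util_star_edge:
  assumes c: "ctr < N" and i: "i < N" "i \<noteq> ctr" and k: "k < N" "k \<noteq> ctr" and ik: "i \<noteq> k"
  shows "util b c' \<gamma> N (insert {i, k} (star N ctr)) i \<le> 2 * (b 1 - c') + real (N - 3) * ((1 - \<gamma>) * b 2)"
proof -
  let ?S = "star N ctr"
  let ?S' = "insert {i, k} ?S"
  have s: "?S \<subseteq> ?S'" by auto
  have nik: "{i, k} \<notin> ?S" using star_edge[OF c] i k by blast
  have D: "deg ?S' i = 2" using deg_insert[OF star_graph[OF c] ik nik] star_Nset_leaf[OF c i] by (simp add: deg_Nset)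
  have V: "(\<Sum>w<N. V b \<gamma> N ?S' i w) \<le> (\<Sum>w<N. if w \<noteq> i \<and> w \<noteq> ctr \<and> w \<noteq> k then (1 - \<gamma>) * b 2 else 0)"
  proof (rule sum_mono)
    fix w assume w: "w \<in> {..<N}"
    show "V b \<gamma> N ?S' i w \<le> (if w \<noteq> i \<and> w \<noteq> ctr \<and> w \<noteq> k then (1 - \<gamma>) * b 2 else 0)"
    proof (cases "w = i")
      case True then show ?thesis by (simp add: V_refl)
    next
      case wi: False
      show ?thesis
      proof (cases "w = ctr \<or> w = k")
        case True
        then have "{i, w} \<in> ?S'" using c i star_edge by blast
        then have "V b \<gamma> N ?S' i w = 0" using V_adj[of i w ?S'] wi by simp
        then show ?thesis using True by auto
      next
        case False
        have h: "conn ?S i w" "ctr \<in> ess_set N ?S i w" using star_leaf_pair[OF c i _ _ ] w wi False by auto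
        have c': "conn ?S' i w" using conn_mono[OF s h(1)] .
        have "1 \<le> gdist ?S' i w" using gdist_pos[OF c'] wi by auto
        moreover have "gdist ?S' i w \<noteq> 1"
        proof
          assume "gdist ?S' i w = 1"
          then have "{i, w} \<in> ?S'" using gdist_one_edge[OF c'] by blast
          then show False using False wi star_edge[OF c] i by (auto simp: doubleton_eq_iff)
        qed
        ultimately have d: "2 \<le> gdist ?S' i w" by simp
        have nb: "\<forall>v. {v, w} \<in> ?S' \<longrightarrow> v = ctr"
        proof (intro allI impI)
          fix v assume "{v, w} \<in> ?S'"
          then have "{v, w} = {i, k} \<or> {v, w} \<in> ?S" by blast
          then show "v = ctr" using False wi star_edge[OF c] by (auto simp: doubleton_eq_iff)
        qed
        have "essential ?S' ctr i w" using uniq_ess_last[OF wi[symmetric] i(2)[symmetric] _ nb] False by auto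
        then have e: "ess_set N ?S' i w \<noteq> {}" using c unfolding ess_set_def by blast
        have "V b \<gamma> N ?S' i w \<le> (1 - \<gamma>) * b 2" using V_upper_ess[of 2, OF _ c' d e] by simp
        then show ?thesis using False wi by simp
      qed
    qed
  qed
  have V2: "(\<Sum>w<N. if w \<noteq> i \<and> w \<noteq> ctr \<and> w \<noteq> k then (1 - \<gamma>) * b 2 else 0) = real (N - 3) * ((1 - \<gamma>) * b 2)"
    using sum_if_const[of "{..<N}" "\<lambda>w. w \<noteq> i \<and> w \<noteq> ctr \<and> w \<noteq> k"] card_minus3[OF i(1) c k(1) i(2) ik k(2)[symmetric]] by simp
  have R: "(\<Sum>p\<in>{..<N}\<times>{..<N}. Rt b \<gamma> N ?S' i p) = 0"
    by (rule Rt_zero) (use not_ess_star[OF c s _ _ i(2)] in blast)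
  show ?thesis unfolding util_eq D R using V V2 by simp
qed


end

lemma iso_new: "graph_on n g \<Longrightarrow> y \<noteq> n \<Longrightarrow> \<not> conn g y n"
  using no_conn_iso graph_on_edge by blast

lemma ess_set_Suc: "graph_on n g \<Longrightarrow> conn g y z \<Longrightarrow> ess_set (Suc n) g y z = ess_set n g y z"
proof -
  assume G: "graph_on n g" and c: "conn g y z"
  have "\<not> essential g n y z"
  proof
    assume "essential g n y z"
    then obtain u v where "{n, u} \<in> g" using ess_nbrs[OF _ c] by blast
    then show False using graph_on_edge[OF G] by blast
  qed
  then show ?thesis unfolding ess_set_def using less_Suc_eq by auto
qed

lemma util_Suc: "graph_on n g \<Longrightarrow> j < n \<Longrightarrow> util b c \<gamma> (Suc n) g j = util b c \<gamma> n g j"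
proof -
  assume G: "graph_on n g" and j: "j < n"
  have Veq: "\<And>w. V b \<gamma> (Suc n) g j w = V b \<gamma> n g j w"
    unfolding V_def using ess_set_Suc[OF G] by simp
  have V: "(\<Sum>w<Suc n. V b \<gamma> (Suc n) g j w) = (\<Sum>w<n. V b \<gamma> n g j w)"
  proof -
    have "V b \<gamma> (Suc n) g j n = 0" unfolding V_def using iso_new[OF G] j by simp
    then show ?thesis using Veq by simp
  qed
  have Rteq: "\<And>p. Rt b \<gamma> (Suc n) g j p = Rt b \<gamma> n g j p"
    unfolding Rt_def using ess_set_Suc[OF G] by (auto split: prod.splits)
  have R: "(\<Sum>p\<in>{..<Suc n}\<times>{..<Suc n}. Rt b \<gamma> (Suc n) g j p) = (\<Sum>p\<in>{..<n}\<times>{..<n}. Rt b \<gamma> n g j p)"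
  proof -
    have "(\<Sum>p\<in>{..<n}\<times>{..<n}. Rt b \<gamma> n g j p) = (\<Sum>p\<in>{..<Suc n}\<times>{..<Suc n}. Rt b \<gamma> n g j p)"
    proof (rule sum.mono_neutral_left)
      show "finite ({..<Suc n}\<times>{..<Suc n})" by simp
      show "{..<n}\<times>{..<n} \<subseteq> {..<Suc n}\<times>{..<Suc n}" by auto
      show "\<forall>p\<in>{..<Suc n}\<times>{..<Suc n} - {..<n}\<times>{..<n}. Rt b \<gamma> n g j p = 0"
      proof
        fix p assume p: "p \<in> {..<Suc n}\<times>{..<Suc n} - {..<n}\<times>{..<n}"
        obtain y z where yz: "p = (y, z)" by (cases p)
        have "y = n \<or> z = n" using p yz by (auto simp: less_Suc_eq)
        then have "\<not> (y < z \<and> conn g y z)" using iso_new[OF G] conn_sym by (metis less_irrefl)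
        then show "Rt b \<gamma> n g j p = 0" unfolding Rt_def yz by auto
      qed
    qed
    then show ?thesis using Rteq by simp
  qed
  show ?thesis unfolding util_eq V R by simp
qed

context bs begin

lemma del_link:
  assumes G: "graph_on N g" and e: "{i, k} \<in> g" and ne: "i \<noteq> k"
    and nc: "\<not> conn (g - {{i, k}}) i k" and cb: "c < b 1"
  shows "util b c \<gamma> N (g - {{i, k}}) i < util b c \<gamma> N g i"
proof -
  let ?h = "g - {{i, k}}"
  have Gh: "graph_on N ?h" using graph_on_diff[OF G] .
  have ik: "i < N" "k < N" using graph_on_edge[OF G e] by auto
  have nh: "{i, k} \<notin> ?h" by simp
  have eq: "insert {i, k} ?h = g" using e by auto
  have "util b c \<gamma> N ?h i + (b 1 - c) - V b \<gamma> N ?h i k \<le> util b c \<gamma> N g i"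
    using add_link[OF Gh ik ne nh] eq by simp
  moreover have "V b \<gamma> N ?h i k = 0" using V_nconn[OF nc] .
  ultimately show ?thesis using cb by simp
qed

lemma util_pendant:
  assumes c: "ctr < n" and l: "l < n" "l \<noteq> ctr"
  shows "util b c' \<gamma> (Suc n) (insert {n, l} (star n ctr)) n
    \<le> (b 1 - c') + (1 - \<gamma>) * b 2 + real (n - 2) * ((1 - \<gamma>) * b 3)"
proof -
  let ?S = "star n ctr"
  let ?P = "insert {n, l} ?S"
  have nbn: "\<forall>v. {n, v} \<in> ?P \<longrightarrow> v = l"
  proof (intro allI impI)
    fix v assume "{n, v} \<in> ?P"
    then have "{n, v} = {n, l} \<or> {n, v} \<in> ?S" by blast
    then show "v = l" using star_edge[OF c] by (auto simp: doubleton_eq_iff)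
  qed
  have D: "deg ?P n = 1"
  proof -
    have "Nset ?P n = {l}" unfolding Nset_def using nbn l by auto
    then show ?thesis by (simp add: deg_Nset)
  qed
  have nl: "n \<noteq> l" "n \<noteq> ctr" using l c by auto
  have e_nl: "{n, l} \<in> ?P" by simp
  have e_lc: "{l, ctr} \<in> ?P" using star_edge[OF c] l c by blast
  have V: "(\<Sum>w<Suc n. V b \<gamma> (Suc n) ?P n w) \<le>
     (\<Sum>w<Suc n. (if w = ctr then (1 - \<gamma>) * b 2 else 0) + (if w < n \<and> w \<noteq> l \<and> w \<noteq> ctr then (1 - \<gamma>) * b 3 else 0))"
  proof (rule sum_mono)
    fix w assume w: "w \<in> {..<Suc n}"
    show "V b \<gamma> (Suc n) ?P n w \<le> (if w = ctr then (1 - \<gamma>) * b 2 else 0) + (if w < n \<and> w \<noteq> l \<and> w \<noteq> ctr then (1 - \<gamma>) * b 3 else 0)"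
    proof (cases "w = n")
      case True then show ?thesis using nl by (simp add: V_refl)
    next
      case wn: False
      then have wlt: "w < n" using w by simp
      show ?thesis
      proof (cases "w = l")
        case True
        then have "V b \<gamma> (Suc n) ?P n w = 0" using V_adj[OF e_nl nl(1)] by simp
        then show ?thesis using True l by simp
      next
        case wl: False
        have ess: "essential ?P l n w" using uniq_ess[OF wn[symmetric] nl(1)[symmetric] wl[symmetric] nbn] .
        have "l \<in> ess_set (Suc n) ?P n w" using l ess unfolding ess_set_def by simp
        then have es: "ess_set (Suc n) ?P n w \<noteq> {}" by blast
        show ?thesis
        proof (cases "w = ctr")
          case True
          have p: "is_path ?P n w [n, l, w]" using True nl l c e_nl e_lc by (auto simp: is_path_Cons2)
          then have cn: "conn ?P n w" unfolding conn_def by blast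
          have "1 \<le> gdist ?P n w" using gdist_pos[OF cn] wn by auto
          moreover have "gdist ?P n w \<noteq> 1" using gdist_one_edge[OF cn] nbn wl by blast
          ultimately have "2 \<le> gdist ?P n w" by simp
          then have "V b \<gamma> (Suc n) ?P n w \<le> (1 - \<gamma>) * b 2" using V_upper_ess[of 2, OF _ cn _ es] by simp
          then show ?thesis using True by simp
        next
          case wc: False
          have e_cw: "{ctr, w} \<in> ?P" using star_edge[OF c] wlt wc c by blast
          have p: "is_path ?P n w [n, l, ctr, w]" using wc wl wn nl l c e_nl e_lc e_cw by (auto simp: is_path_Cons2)
          then have cn: "conn ?P n w" unfolding conn_def by blast
          have nbw: "\<forall>v. {v, w} \<in> ?P \<longrightarrow> v = ctr"
          proof (intro allI impI)
            fix v assume "{v, w} \<in> ?P"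
            then have "{v, w} = {n, l} \<or> {v, w} \<in> ?S" by blast
            then show "v = ctr" using star_edge[OF c] wn wl wc by (auto simp: doubleton_eq_iff)
          qed
          have "3 \<le> gdist ?P n w"
          proof (rule gdist_ge[OF cn])
            fix xs assume px: "is_path ?P n w xs"
            have a1: "xs ! 1 = l" using uniq_nb_first[OF px wn[symmetric] nbn] .
            have a2: "xs ! (length xs - 2) = ctr" using uniq_nb_last[OF px wn[symmetric] nbw] .
            have l2: "2 \<le> length xs" using path_len2[OF px wn[symmetric]] .
            have "length xs \<noteq> 2"
            proof
              assume "length xs = 2"
              then have "xs ! 1 = w" using path_last[OF px] by simp
              then show False using a1 wl by simp
            qed
            moreover have "length xs \<noteq> 3"
            proof
              assume "length xs = 3"
              then have "xs ! 1 = ctr" using a2 by simp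
              then show False using a1 l by simp
            qed
            ultimately show "3 < length xs" using l2 by linarith
          qed
          then have "V b \<gamma> (Suc n) ?P n w \<le> (1 - \<gamma>) * b 3" using V_upper_ess[of 3, OF _ cn _ es] by simp
          then show ?thesis using wc wl wlt by simp
        qed
      qed
    qed
  qed
  have S1: "(\<Sum>w<Suc n. (if w = ctr then (1 - \<gamma>) * b 2 else 0)) = (1 - \<gamma>) * b 2"
    using c by (simp add: sum.delta)
  have S2: "(\<Sum>w<Suc n. (if w < n \<and> w \<noteq> l \<and> w \<noteq> ctr then (1 - \<gamma>) * b 3 else 0)) = real (n - 2) * ((1 - \<gamma>) * b 3)"
  proof -
    have "{w \<in> {..<Suc n}. w < n \<and> w \<noteq> l \<and> w \<noteq> ctr} = {w \<in> {..<n}. w \<noteq> l \<and> w \<noteq> ctr}" by auto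
    then show ?thesis using sum_if_const[of "{..<Suc n}" "\<lambda>w. w < n \<and> w \<noteq> l \<and> w \<noteq> ctr"] card_minus2[OF l(1) c l(2)] by simp
  qed
  have R: "(\<Sum>p\<in>{..<Suc n}\<times>{..<Suc n}. Rt b \<gamma> (Suc n) ?P n p) = 0"
  proof (rule Rt_zero)
    fix y z assume "conn ?P y z"
    show "\<not> essential ?P n y z"
    proof
      assume "essential ?P n y z"
      then obtain u v where "u \<noteq> v" "{n, u} \<in> ?P" "{n, v} \<in> ?P" using ess_nbrs \<open>conn ?P y z\<close> by blast
      then show False using nbn by blast
    qed
  qed
  show ?thesis unfolding util_eq D R using V S1 S2 by (simp add: sum.distrib)
qed

end


lemma take_path: "is_path g y z xs \<Longrightarrow> 0 < k \<Longrightarrow> k \<le> length xs \<Longrightarrow> is_path g y (xs ! (k - 1)) (take k xs)"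
  unfolding is_path_def
  by (auto simp: hd_conv_nth last_conv_nth min_def)

lemma Cset_eq: "conn g x y \<Longrightarrow> Cset N g x = Cset N g y"
  unfolding Cset_def using conn_sym conn_trans by blast

lemma roots_bound:
  assumes G: "graph_on N g" and N: "1 \<le> N"
  shows "\<exists>r. 1 \<le> r \<and> r \<le> N \<and> (\<forall>j<N. card (Cset N g j) \<le> N - r + 1) \<and> 2 * (N - r) \<le> (\<Sum>j<N. card (Nset g j))"
proof -
  define C where "C = Cset N g"
  define R where "R = {u. u < N \<and> (\<forall>v\<in>C u. u \<le> v)}"
  define m where "m = (\<lambda>v. Min (C v))"
  define H where "H = (\<lambda>v. gdist g (m v) v)"
  have finC: "\<And>v. finite (C v)" unfolding C_def Cset_def by simp
  have vC: "\<And>v. v < N \<Longrightarrow> v \<in> C v" unfolding C_def Cset_def by simp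
  have RN: "R \<subseteq> {..<N}" unfolding R_def by auto
  have finR: "finite R" using RN finite_subset by blast
  have mC: "\<And>v. v < N \<Longrightarrow> m v \<in> C v" unfolding m_def using finC vC Min_in by blast
  have mle: "\<And>v w. w \<in> C v \<Longrightarrow> m v \<le> w" unfolding m_def using finC by simp
  have conn_m: "\<And>v. v < N \<Longrightarrow> conn g (m v) v" using mC conn_sym unfolding C_def Cset_def by blast
  have Cconn: "\<And>u v. conn g u v \<Longrightarrow> C u = C v" unfolding C_def using Cset_eq by blast
  have r0: "0 \<in> R" unfolding R_def using N by auto
  have par: "\<And>v. v < N \<Longrightarrow> v \<notin> R \<Longrightarrow> \<exists>u. u < N \<and> u \<noteq> v \<and> {u, v} \<in> g \<and> C u = C v \<and> H u < H v"
  proof -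
    fix v assume v: "v < N" "v \<notin> R"
    then obtain w where w: "w \<in> C v" "w < v" unfolding R_def by auto
    have mv: "m v < v" using mle[OF w(1)] w(2) by simp
    have cm: "conn g (m v) v" using conn_m[OF v(1)] .
    obtain xs where p: "is_path g (m v) v xs" and l: "length xs = Suc (gdist g (m v) v)" using gdist_path[OF cm] by blast
    have ne: "m v \<noteq> v" using mv by simp
    have l2: "2 \<le> length xs" using path_len2[OF p ne] .
    let ?u = "xs ! (length xs - 2)"
    have e: "{?u, v} \<in> g" using path_last_edge[OF p ne] .
    have uv: "?u < N" "?u \<noteq> v" using graph_on_edge[OF G e] by auto
    have cuv: "conn g ?u v" using conn_edge[OF e] .
    have Ceq: "C ?u = C v" using Cconn[OF cuv] .
    have mu: "m ?u = m v" unfolding m_def using Ceq by simp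
    have pt: "is_path g (m v) ?u (take (length xs - 1) xs)"
      using take_path[OF p, of "length xs - 1"] l2 by (simp add: numeral_2_eq_2)
    have "gdist g (m v) ?u \<le> length xs - 2" using gdist_le[OF pt] l2 by simp
    then have "H ?u < H v" unfolding H_def mu using l l2 by simp
    then show "\<exists>u. u < N \<and> u \<noteq> v \<and> {u, v} \<in> g \<and> C u = C v \<and> H u < H v" using uv e Ceq by blast
  qed
  define P where "P = (\<lambda>v. SOME u. u < N \<and> u \<noteq> v \<and> {u, v} \<in> g \<and> C u = C v \<and> H u < H v)"
  define NR where "NR = {..<N} - R"
  have Pp: "\<And>v. v \<in> NR \<Longrightarrow> P v < N \<and> P v \<noteq> v \<and> {P v, v} \<in> g \<and> C (P v) = C v \<and> H (P v) < H v"
  proof -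
    fix v assume "v \<in> NR"
    then have "v < N" "v \<notin> R" unfolding NR_def by auto
    from par[OF this] show "P v < N \<and> P v \<noteq> v \<and> {P v, v} \<in> g \<and> C (P v) = C v \<and> H (P v) < H v"
      unfolding P_def by (rule someI_ex)
  qed
  define A1 where "A1 = (\<lambda>v. (v, P v)) ` NR"
  define A2 where "A2 = (\<lambda>v. (P v, v)) ` NR"
  have finNR: "finite NR" unfolding NR_def by simp
  have c1: "card A1 = card NR" unfolding A1_def by (rule card_image) (auto intro: inj_onI)
  have c2: "card A2 = card NR" unfolding A2_def by (rule card_image) (auto intro: inj_onI)
  have disj: "A1 \<inter> A2 = {}"
  proof -
    { fix v u assume v: "v \<in> NR" and u: "u \<in> NR" and eq: "(v, P v) = (P u, u)"
      then have "v = P u" "u = P v" by auto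
      then have "H v < H u" "H u < H v" using Pp[OF u] Pp[OF v] by auto
      then have False by simp }
    then show ?thesis unfolding A1_def A2_def by blast
  qed
  define E where "E = (SIGMA j:{..<N}. Nset g j)"
  have finE: "finite E" unfolding E_def using deg_finite[OF G] by (auto simp: Nset_def)
  have cE: "card E = (\<Sum>j<N. card (Nset g j))" unfolding E_def
    using deg_finite[OF G] by (subst card_SigmaI) (auto simp: Nset_def)
  have sub: "A1 \<union> A2 \<subseteq> E"
  proof
    fix x assume "x \<in> A1 \<union> A2"
    then obtain v where v: "v \<in> NR" and x: "x = (v, P v) \<or> x = (P v, v)" unfolding A1_def A2_def by blast
    have vN: "v < N" using v unfolding NR_def by simp
    have e: "{P v, v} \<in> g" "P v \<noteq> v" "P v < N" using Pp[OF v] by auto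
    then have e': "{v, P v} \<in> g" by (simp add: insert_commute)
    show "x \<in> E" using x vN e e' unfolding E_def Nset_def by auto
  qed
  have fA: "finite A1" "finite A2" unfolding A1_def A2_def using finNR by auto
  have "2 * card NR = card (A1 \<union> A2)" using card_Un_disjoint[OF fA disj] c1 c2 by simp
  also have "\<dots> \<le> card E" using card_mono[OF finE sub] .
  finally have B: "2 * (N - card R) \<le> (\<Sum>j<N. card (Nset g j))"
    using cE card_Diff_subset[OF finR RN] unfolding NR_def by simp
  have Aj: "\<forall>j<N. card (Cset N g j) \<le> N - card R + 1"
  proof (intro allI impI)
    fix j assume j: "j < N"
    have one: "card (C j \<inter> R) \<le> 1"
    proof -
      have "\<forall>x\<in>C j \<inter> R. \<forall>y\<in>C j \<inter> R. x = y"
      proof (intro ballI)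
        fix x y assume x: "x \<in> C j \<inter> R" and y: "y \<in> C j \<inter> R"
        have "conn g j x" "conn g j y" using x y unfolding C_def Cset_def by auto
        then have cxy: "conn g x y" using conn_sym conn_trans by blast
        have "y \<in> C x" using cxy y unfolding C_def Cset_def R_def by auto
        then have "x \<le> y" using x unfolding R_def by auto
        moreover have "x \<in> C y" using conn_sym[OF cxy] x unfolding C_def Cset_def R_def by auto
        then have "y \<le> x" using y unfolding R_def by auto
        ultimately show "x = y" by simp
      qed
      then show ?thesis using finC[of j] by (simp add: card_le_Suc0_iff_eq)
    qed
    have "card (C j) = card (C j - R) + card (C j \<inter> R)"
      using card_Diff_subset_Int[of "C j" R] finC[of j] finR
      by (metis Diff_Diff_Int card_Diff_subset finite_Diff inf.cobounded1 inf_commute card_Un_disjoint Diff_disjoint Un_Diff_Int)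
    moreover have "card (C j - R) \<le> N - card R"
    proof -
      have "C j - R \<subseteq> {..<N} - R" unfolding C_def Cset_def by auto
      then have "card (C j - R) \<le> card ({..<N} - R)" by (rule card_mono[rotated]) simp
      then show ?thesis using card_Diff_subset[OF finR RN] by simp
    qed
    ultimately show "card (Cset N g j) \<le> N - card R + 1" using one unfolding C_def by simp
  qed
  have r1: "1 \<le> card R" using r0 finR by (metis One_nat_def Suc_leI card_gt_0_iff empty_iff)
  have rN: "card R \<le> N" using card_mono[OF _ RN] by simp
  show ?thesis using r1 rN Aj B by blast
qed


context bs begin

lemma star_welfare:
  assumes c: "ctr < N"
  shows "welfare b c' N (star N ctr) = real (N - 1) * (b 1 - c') + real (N - 1) * ((b 1 - c') + real (N - 2) * b 2)"
proof -
  let ?S = "star N ctr"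
  let ?t = "\<lambda>j. real (card (Nset ?S j)) * (b 1 - c') + (\<Sum>w\<in>Wset N ?S j. b (gdist ?S j w))"
  have tc: "?t ctr = real (N - 1) * (b 1 - c')"
  proof -
    have "card (Nset ?S ctr) = N - 1" using star_Nset_ctr[OF c] c by simp
    moreover have "Wset N ?S ctr = {}"
    proof -
      { fix w assume "w \<in> Wset N ?S ctr"
        then have w: "w < N" "gdist ?S ctr w > 1" unfolding Wset_def by auto
        then have "w \<noteq> ctr" by auto
        moreover have "{ctr, w} \<in> ?S" using star_edge[OF c] w c \<open>w \<noteq> ctr\<close> by simp
        ultimately have "gdist ?S ctr w = 1" using gdist_edge by blast
        then have False using w by simp }
      then show ?thesis by blast
    qed
    ultimately show ?thesis by simp
  qed
  have tl: "\<And>j. j \<in> {..<N} - {ctr} \<Longrightarrow> ?t j = (b 1 - c') + real (N - 2) * b 2"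
  proof -
    fix j assume j: "j \<in> {..<N} - {ctr}"
    then have jN: "j < N" "j \<noteq> ctr" by auto
    have "card (Nset ?S j) = 1" using star_Nset_leaf[OF c jN] by simp
    moreover have W: "Wset N ?S j = {w \<in> {..<N}. w \<noteq> j \<and> w \<noteq> ctr}"
    proof
      show "Wset N ?S j \<subseteq> {w \<in> {..<N}. w \<noteq> j \<and> w \<noteq> ctr}"
      proof
        fix w assume "w \<in> Wset N ?S j"
        then have w: "w < N" "gdist ?S j w > 1" unfolding Wset_def by auto
        have "w \<noteq> j" using w by auto
        moreover have "w \<noteq> ctr"
        proof
          assume "w = ctr"
          moreover have "{j, w} \<in> ?S" using star_edge[OF c] jN c \<open>w = ctr\<close> by simp
          ultimately have "gdist ?S j w = 1" using gdist_edge jN by blast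
          then show False using w by simp
        qed
        ultimately show "w \<in> {w \<in> {..<N}. w \<noteq> j \<and> w \<noteq> ctr}" using w by simp
      qed
    next
      show "{w \<in> {..<N}. w \<noteq> j \<and> w \<noteq> ctr} \<subseteq> Wset N ?S j"
      proof
        fix w assume w: "w \<in> {w \<in> {..<N}. w \<noteq> j \<and> w \<noteq> ctr}"
        then have "conn ?S j w \<and> gdist ?S j w = 2" using star_leaf_pair[OF c jN, of w] by auto
        then show "w \<in> Wset N ?S j" using w unfolding Wset_def by auto
      qed
    qed
    moreover have "(\<Sum>w\<in>{w \<in> {..<N}. w \<noteq> j \<and> w \<noteq> ctr}. b (gdist ?S j w)) = (\<Sum>w\<in>{w \<in> {..<N}. w \<noteq> j \<and> w \<noteq> ctr}. b 2)"
      by (rule sum.cong[OF refl]) (use star_leaf_pair[OF c jN] in auto)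
    ultimately show "?t j = (b 1 - c') + real (N - 2) * b 2" using card_minus2[OF jN(1) c jN(2)] by simp
  qed
  have "welfare b c' N ?S = (\<Sum>j<N. ?t j)" by (simp only: welfare_eq)
  also have "\<dots> = ?t ctr + (\<Sum>j\<in>{..<N} - {ctr}. ?t j)"
    by (rule sum.remove) (use c in simp_all)
  also have "(\<Sum>j\<in>{..<N} - {ctr}. ?t j) = (\<Sum>j\<in>{..<N} - {ctr}. (b 1 - c') + real (N - 2) * b 2)"
    using tl by (rule sum.cong[OF refl])
  also have "\<dots> = real (N - 1) * ((b 1 - c') + real (N - 2) * b 2)" using c by (simp only: sum_constant card_Diff_singleton_if) simp
  finally show ?thesis unfolding tc by simp
qed

lemma star_efficient:
  assumes a0: "0 < b 1 - c'" and a2: "b 1 - c' \<le> b 2" and c: "ctr < N"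
  shows "efficient b c' N (star N ctr)"
  unfolding efficient_def
proof (intro conjI allI impI)
  show "graph_on N (star N ctr)" using star_graph[OF c] .
next
  fix g' assume G: "graph_on N g'"
  define a where "a = b 1 - c'"
  define d where "d = b 2 - a"
  have d0: "0 \<le> d" "d \<le> b 2" using a0 a2 unfolding a_def d_def by auto
  have N1: "1 \<le> N" using c by simp
  obtain r where r: "1 \<le> r" "r \<le> N" "\<forall>j<N. card (Cset N g' j) \<le> N - r + 1"
    "2 * (N - r) \<le> (\<Sum>j<N. card (Nset g' j))" using roots_bound[OF G N1] by blast
  have b2p: "0 < b 2" using bpos'[of 2] by simp
  have tb: "\<And>j. j < N \<Longrightarrow> real (card (Nset g' j)) * (b 1 - c') + (\<Sum>w\<in>Wset N g' j. b (gdist g' j w))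
        \<le> real (N - r) * b 2 - real (card (Nset g' j)) * d"
  proof -
    fix j assume j: "j < N"
    have k: "card (Nset g' j) \<le> card (Cset N g' j) - 1" using NW_card[OF G j] by simp
    have kc: "card (Cset N g' j) - 1 \<le> N - r" using r(3) j by fastforce
    have "real (card (Nset g' j)) * (b 1 - c') + (\<Sum>w\<in>Wset N g' j. b (gdist g' j w))
        \<le> real (card (Nset g' j)) * (b 1 - c') + real (card (Cset N g' j) - 1 - card (Nset g' j)) * b 2"
      using node_bound[OF G j] .
    also have "\<dots> = real (card (Cset N g' j) - 1) * b 2 - real (card (Nset g' j)) * d"
    proof -
      have e: "real (card (Cset N g' j) - 1 - card (Nset g' j)) = real (card (Cset N g' j) - 1) - real (card (Nset g' j))"
        by (rule of_nat_diff[OF k])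
      show ?thesis unfolding e d_def a_def by (simp add: algebra_simps)
    qed
    also have "\<dots> \<le> real (N - r) * b 2 - real (card (Nset g' j)) * d"
      using kc b2p by (simp add: mult_right_mono)
    finally show "real (card (Nset g' j)) * (b 1 - c') + (\<Sum>w\<in>Wset N g' j. b (gdist g' j w))
        \<le> real (N - r) * b 2 - real (card (Nset g' j)) * d" .
  qed
  have "welfare b c' N g' \<le> (\<Sum>j<N. real (N - r) * b 2 - real (card (Nset g' j)) * d)"
    unfolding welfare_eq by (rule sum_mono) (use tb in simp)
  also have "\<dots> = real N * real (N - r) * b 2 - real (\<Sum>j<N. card (Nset g' j)) * d"
    by (simp add: sum_subtractf sum_distrib_right)
  also have "\<dots> \<le> real N * real (N - r) * b 2 - real (2 * (N - r)) * d"
  proof -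
    have "real (2 * (N - r)) \<le> real (\<Sum>j<N. card (Nset g' j))" using r(4) by linarith
    then have "real (2 * (N - r)) * d \<le> real (\<Sum>j<N. card (Nset g' j)) * d" by (rule mult_right_mono[OF _ d0(1)])
    then show ?thesis by simp
  qed
  also have "\<dots> = real (N - r) * (real N * b 2 - 2 * d)" unfolding of_nat_mult by (simp add: algebra_simps)
  also have "\<dots> \<le> real (N - 1) * (real N * b 2 - 2 * d)"
  proof (cases "N = 1")
    case True then show ?thesis using r by simp
  next
    case False
    then have "2 \<le> real N" using N1 by linarith
    then have "2 * b 2 \<le> real N * b 2" using b2p by (simp add: mult_right_mono)
    then have "0 \<le> real N * b 2 - 2 * d" using d0 by linarith
    moreover have "real (N - r) \<le> real (N - 1)" using r by simp
    ultimately show ?thesis by (rule mult_right_mono[rotated])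
  qed
  also have "\<dots> = welfare b c' N (star N ctr)"
  proof (cases "N = 1")
    case True then show ?thesis unfolding star_welfare[OF c] by simp
  next
    case False
    then have e1: "real (N - 1) = real N - 1" and e2: "real (N - 2) = real N - 2" using N1 by (simp_all add: of_nat_diff)
    show ?thesis unfolding star_welfare[OF c] e1 e2 d_def a_def by (simp add: algebra_simps)
  qed
  finally show "welfare b c' N g' \<le> welfare b c' N (star N ctr)" .
qed

end


lemma graph_on_mono: "graph_on n g \<Longrightarrow> n \<le> m \<Longrightarrow> graph_on m g"
  unfolding graph_on_def by (meson less_le_trans)

lemma graph_on_1: "graph_on (Suc 0) g \<Longrightarrow> g = {}"
  unfolding graph_on_def by auto

lemma move_graph: "move b c \<gamma> N g g' \<Longrightarrow> graph_on N g \<Longrightarrow> graph_on N g'"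
proof -
  assume m: "move b c \<gamma> N g g'" and G: "graph_on N g"
  then obtain i where i: "i < N" "g' \<in> options b c \<gamma> N g i" unfolding move_def by blast
  then show ?thesis
  proof (cases "g' \<in> {insert {i, k} g | k. k < N \<and> k \<noteq> i \<and> {i, k} \<notin> g \<and>
                          util b c \<gamma> N g k \<le> util b c \<gamma> N (insert {i, k} g) k}")
    case True
    then obtain k where "g' = insert {i, k} g" "k < N" "k \<noteq> i" by blast
    then show ?thesis using graph_on_insert[OF G i(1)] by simp
  next
    case False
    then obtain k where "g' = g - {{i, k}}" using i(2) unfolding options_def by blast
    then show ?thesis using graph_on_diff[OF G] by simp
  qed
qed

lemma moves_graph: "(move b c \<gamma> N)\<^sup>*\<^sup>* g g' \<Longrightarrow> graph_on N g \<Longrightarrow> graph_on N g'"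
  by (induction rule: rtranclp_induct) (auto intro: move_graph)

lemma formed_ps: "formed b c \<gamma> c0 n g \<Longrightarrow> graph_on n g \<and> (n = 1 \<or> pairwise_stable b c \<gamma> n g)"
proof (induction rule: formed.induct)
  case start
  then show ?case unfolding graph_on_def by simp
next
  case (step n g T g')
  have T: "T < n" using step(2) unfolding enters_def entry_accepted_def by blast
  have "graph_on (Suc n) g" using graph_on_mono[of n g "Suc n"] step(5) by simp
  then have "graph_on (Suc n) (insert {n, T} g)" using T by (intro graph_on_insert) auto
  then show ?case using moves_graph[OF step(3)] step(4) by blast
qed

context bs begin

lemma no_move:
  assumes c: "ctr < N" and cb: "c' < b 1" and cl: "b 1 - c' \<le> (1 - \<gamma>) * b 2"
  shows "\<not> move b c' \<gamma> N (star N ctr) h"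
proof
  let ?S = "star N ctr"
  assume "move b c' \<gamma> N ?S h"
  then obtain i where i: "i < N" "h \<in> options b c' \<gamma> N ?S i" "util b c' \<gamma> N ?S i < util b c' \<gamma> N h i"
    unfolding move_def by blast
  show False
  proof (cases "h \<in> {insert {i, k} ?S | k. k < N \<and> k \<noteq> i \<and> {i, k} \<notin> ?S \<and>
                          util b c' \<gamma> N ?S k \<le> util b c' \<gamma> N (insert {i, k} ?S) k}")
    case True
    then obtain k where k: "h = insert {i, k} ?S" "k < N" "k \<noteq> i" "{i, k} \<notin> ?S" by blast
    have ic: "i \<noteq> ctr" using k star_edge[OF c] i by blast
    have kc: "k \<noteq> ctr" using k star_edge[OF c] i by blast
    have N3: "3 \<le> N" using ic kc k(3) i(1) k(2) c by presburger
    have "util b c' \<gamma> N h i \<le> 2 * (b 1 - c') + real (N - 3) * ((1 - \<gamma>) * b 2)"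
      using util_star_edge[OF c i(1) ic k(2) kc k(3)[symmetric]] k(1) by simp
    moreover have "util b c' \<gamma> N ?S i = (b 1 - c') + real (N - 2) * ((1 - \<gamma>) * b 2)"
      using util_star_leaf[OF c i(1) ic] .
    moreover have "real (N - 2) = real (N - 3) + 1" using N3 by (simp add: of_nat_diff)
    ultimately show False using i(3) cl by (simp add: algebra_simps)
  next
    case False
    then obtain k where k: "h = ?S - {{i, k}}" "k \<noteq> i" "{i, k} \<in> ?S" using i(2) unfolding options_def by blast
    have nc: "\<not> conn (?S - {{i, k}}) i k"
    proof (cases "i = ctr")
      case True
      have "\<forall>u. {u, k} \<notin> ?S - {{i, k}}"
      proof (intro allI)
        fix u show "{u, k} \<notin> ?S - {{i, k}}"
        proof
          assume u: "{u, k} \<in> ?S - {{i, k}}"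
          then have "{k, u} \<in> ?S" by (simp add: insert_commute)
          then have "u = ctr" using star_leaf_nb[OF c] k(2) True by blast
          then show False using u True by (simp add: insert_commute)
        qed
      qed
      then show ?thesis using no_conn_iso[OF k(2)[symmetric]] by blast
    next
      case False
      then have kc: "k = ctr" using star_leaf_nb[OF c False k(3)] by simp
      have "\<forall>u. {u, i} \<notin> ?S - {{i, k}}"
      proof (intro allI)
        fix u show "{u, i} \<notin> ?S - {{i, k}}"
        proof
          assume u: "{u, i} \<in> ?S - {{i, k}}"
          then have "{i, u} \<in> ?S" by (simp add: insert_commute)
          then have "u = ctr" using star_leaf_nb[OF c False] by blast
          then show False using u kc by (simp add: insert_commute)
        qed
      qed
      then have "\<not> conn (?S - {{i, k}}) k i" using no_conn_iso[OF k(2)] by blast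
      then show ?thesis using conn_sym by blast
    qed
    have "util b c' \<gamma> N h i < util b c' \<gamma> N ?S i"
      using del_link[OF star_graph[OF c] k(3) k(2)[symmetric] nc cb] k(1) by simp
    then show False using i(3) by simp
  qed
qed

lemma no_entry:
  assumes cb: "b 1 < c'"
  shows "formed b c' \<gamma> c0 n g \<Longrightarrow> n = 1 \<and> g = {}"
proof (induction rule: formed.induct)
  case start then show ?case by simp
next
  case (step n g T g')
  then have n: "n = 1" and g: "g = {}" by auto
  have T: "T = 0" using step(2) n unfolding enters_def entry_accepted_def by auto
  have e: "insert {1, 0} {} = star 2 0" using star_Suc[of 0 1] star_1 by (simp add: numeral_2_eq_2)
  have "util b c' \<gamma> (Suc 1) (insert {1, 0} {}) 1 = b 1 - c'"
    unfolding e using util_star_leaf[of 0 2 1] by (simp add: numeral_2_eq_2)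
  moreover have "deg {} 0 = 0" unfolding deg_def by simp
  ultimately have "entrant_value b c' \<gamma> c0 n g T = b 1 - c'" unfolding entrant_value_def using n g T by simp
  then show ?case using step(2) cb unfolding enters_def by simp
qed

lemma formed_star:
  assumes cl: "b 1 - b 2 + \<gamma> * b 2 \<le> c'" and cb: "c' < b 1" and c0: "c0 < (1 - \<gamma>) * (b 2 - b 3)"
  shows "formed b c' \<gamma> c0 n g \<Longrightarrow> \<exists>ctr<n. g = star n ctr"
proof (induction rule: formed.induct)
  case start then show ?case using star_1 by auto
next
  case (step n g T g')
  obtain ctr where c: "ctr < n" and g: "g = star n ctr" using step(5) by blast
  let ?S = "star n ctr"
  have acc: "entry_accepted b c' \<gamma> n g T" and val: "entrant_value b c' \<gamma> c0 n g T > 0"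
    and mx: "\<And>T'. entry_accepted b c' \<gamma> n g T' \<Longrightarrow> entrant_value b c' \<gamma> c0 n g T' \<le> entrant_value b c' \<gamma> c0 n g T"
    using step(2) unfolding enters_def by auto
  have T: "T < n" using acc unfolding entry_accepted_def by simp
  have cl': "b 1 - c' \<le> (1 - \<gamma>) * b 2" using cl by (simp add: algebra_simps)
  have ex: "\<exists>ctr'<Suc n. insert {n, T} g = star (Suc n) ctr'"
  proof (cases "T = ctr")
    case True then show ?thesis using star_Suc[OF c] g c by (intro exI[of _ ctr]) auto
  next
    case Tc: False
    show ?thesis
    proof (cases "n = 2")
      case True
      then show ?thesis using star_swap2[of ctr T] c T Tc g by (intro exI[of _ T]) (auto simp: numeral_3_eq_3)
    next
      case False
      then have n3: "3 \<le> n" using c T Tc by presburger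
      have GS: "graph_on n ?S" using star_graph[OF c] .
      have GS': "graph_on (Suc n) ?S" using graph_on_mono[OF GS] by simp
      have acc_c: "entry_accepted b c' \<gamma> n g ctr"
        unfolding entry_accepted_def
      proof (intro conjI)
        show "ctr < n" using c .
        have cn: "ctr \<noteq> n" using c by simp
        have nin: "{ctr, n} \<notin> ?S" using graph_on_edge[OF GS] by blast
        have "util b c' \<gamma> (Suc n) ?S ctr + (b 1 - c') - V b \<gamma> (Suc n) ?S ctr n \<le> util b c' \<gamma> (Suc n) (insert {ctr, n} ?S) ctr"
          using add_link[OF GS' _ _ cn nin] c by simp
        moreover have "V b \<gamma> (Suc n) ?S ctr n = 0" using V_nconn iso_new[OF GS cn] by blast
        moreover have "util b c' \<gamma> (Suc n) ?S ctr = util b c' \<gamma> n ?S ctr" using util_Suc[OF GS c] .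
        moreover have "insert {ctr, n} ?S = insert {n, ctr} ?S" by (simp add: insert_commute)
        ultimately show "util b c' \<gamma> n g ctr \<le> util b c' \<gamma> (Suc n) (insert {n, ctr} g) ctr"
          using cb g by simp
      qed
      have vc: "entrant_value b c' \<gamma> c0 n g ctr = (b 1 - c') + real (Suc n - 2) * ((1 - \<gamma>) * b 2) - c0 * real (n - 1)"
      proof -
        have "util b c' \<gamma> (Suc n) (insert {n, ctr} ?S) n = (b 1 - c') + real (Suc n - 2) * ((1 - \<gamma>) * b 2)"
          unfolding star_Suc[OF c] using util_star_leaf[of ctr "Suc n" n] c by simp
        moreover have "deg ?S ctr = n - 1" unfolding deg_Nset star_Nset_ctr[OF c] using c by simp
        ultimately show ?thesis unfolding entrant_value_def g by simp
      qed
      have vT: "entrant_value b c' \<gamma> c0 n g T \<le> (b 1 - c') + (1 - \<gamma>) * b 2 + real (n - 2) * ((1 - \<gamma>) * b 3) - c0 * 1"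
      proof -
        have "deg ?S T = 1" unfolding deg_Nset star_Nset_leaf[OF c T Tc] by simp
        then show ?thesis unfolding entrant_value_def g using util_pendant[OF c T Tc, of c'] by simp
      qed
      have le: "entrant_value b c' \<gamma> c0 n g ctr \<le> entrant_value b c' \<gamma> c0 n g T" using mx[OF acc_c] .
      define x where "x = real n"
      have x3: "3 \<le> x" using n3 unfolding x_def by simp
      have e1: "real (Suc n - 2) = x - 1" "real (n - 1) = x - 1" "real (n - 2) = x - 2"
        using n3 unfolding x_def by (simp_all add: of_nat_diff)
      define D where "D = (1 - \<gamma>) * (b 2 - b 3) - c0"
      have D0: "0 < D" using c0 unfolding D_def by simp
      have pos: "0 < (x - 2) * D" using x3 D0 by simp
      have "(x - 2) * D = ((b 1 - c') + (x - 1) * ((1 - \<gamma>) * b 2) - c0 * (x - 1))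
           - ((b 1 - c') + (1 - \<gamma>) * b 2 + (x - 2) * ((1 - \<gamma>) * b 3) - c0 * 1)"
        unfolding D_def by (simp add: algebra_simps)
      moreover have "entrant_value b c' \<gamma> c0 n g ctr = (b 1 - c') + (x - 1) * ((1 - \<gamma>) * b 2) - c0 * (x - 1)"
        using vc e1 by simp
      moreover have "entrant_value b c' \<gamma> c0 n g T \<le> (b 1 - c') + (1 - \<gamma>) * b 2 + (x - 2) * ((1 - \<gamma>) * b 3) - c0 * 1"
        using vT e1 by simp
      ultimately have False using le pos by linarith
      then show ?thesis by simp
    qed
  qed
  then obtain ctr' where c': "ctr' < Suc n" and e: "insert {n, T} g = star (Suc n) ctr'" by blast
  have "g' = star (Suc n) ctr'"
    using step(3) unfolding e
  proof (cases rule: converse_rtranclpE)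
    case base then show ?thesis by simp
  next
    case (step z)
    then show ?thesis using no_move[OF c' cb cl'] by blast
  qed
  then show ?case using c' by blast
qed

end

theorem theorem6:
  fixes b :: "nat \<Rightarrow> real" and c \<gamma> c0 :: real
  assumes b_decr: "\<forall>i\<ge>1. b (Suc i) < b i"
    and b_pos: "\<forall>i\<ge>1. 0 < b i"
    and gamma: "0 \<le> \<gamma>" "\<gamma> < 1"
  shows "(c > b 1 \<longrightarrow>
            (\<forall>n g. formed b c \<gamma> c0 n g \<longrightarrow> n = 1 \<and> g = {}) \<and> efficient b c 1 {})
       \<and> (b 1 - b 2 + \<gamma> * b 2 \<le> c \<and> c < b 1 \<and> c0 < (1 - \<gamma>) * (b 2 - b 3) \<longrightarrow>
            (\<forall>n g. formed b c \<gamma> c0 n g \<longrightarrow> efficient b c n g))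
       \<and> (c < b 1 - b 2 \<and> c0 \<le> (1 - \<gamma>) * b 2 \<longrightarrow>
            (\<forall>n g. formed b c \<gamma> c0 n g \<longrightarrow> efficient b c n g))"
proof -
  interpret bs b \<gamma> using b_decr b_pos gamma by unfold_locales auto
  have b2p: "0 < b 2" using bpos'[of 2] by simp
  have P1: "c > b 1 \<longrightarrow>
            (\<forall>n g. formed b c \<gamma> c0 n g \<longrightarrow> n = 1 \<and> g = {}) \<and> efficient b c 1 {}"
  proof (rule impI, rule conjI)
    assume "b 1 < c"
    then show "\<forall>n g. formed b c \<gamma> c0 n g \<longrightarrow> n = 1 \<and> g = {}" using no_entry by blast
  next
    show "efficient b c 1 {}" unfolding efficient_def
    proof (intro conjI allI impI)
      show "graph_on 1 {}" unfolding graph_on_def by simp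
      fix g' assume "graph_on 1 g'"
      then have "g' = {}" using graph_on_1 by simp
      then show "welfare b c 1 g' \<le> welfare b c 1 {}" by simp
    qed
  qed
  have P2: "b 1 - b 2 + \<gamma> * b 2 \<le> c \<and> c < b 1 \<and> c0 < (1 - \<gamma>) * (b 2 - b 3) \<longrightarrow>
            (\<forall>n g. formed b c \<gamma> c0 n g \<longrightarrow> efficient b c n g)"
  proof (intro impI allI)
    fix n g assume h: "b 1 - b 2 + \<gamma> * b 2 \<le> c \<and> c < b 1 \<and> c0 < (1 - \<gamma>) * (b 2 - b 3)"
      and f: "formed b c \<gamma> c0 n g"
    obtain ctr where "ctr < n" "g = star n ctr" using formed_star[of c c0 n g] h f by blast
    moreover have gb: "0 \<le> \<gamma> * b 2" using gamma b2p by simp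
    moreover have "0 < b 1 - c" "b 1 - c \<le> b 2" using h gb by linarith+
    ultimately show "efficient b c n g" using star_efficient by blast
  qed
  have P3: "c < b 1 - b 2 \<and> c0 \<le> (1 - \<gamma>) * b 2 \<longrightarrow>
            (\<forall>n g. formed b c \<gamma> c0 n g \<longrightarrow> efficient b c n g)"
  proof (intro impI allI)
    fix n g assume h: "c < b 1 - b 2 \<and> c0 \<le> (1 - \<gamma>) * b 2" and f: "formed b c \<gamma> c0 n g"
    have G: "graph_on n g" and ps: "n = 1 \<or> pairwise_stable b c \<gamma> n g" using formed_ps[OF f] by auto
    have comp: "\<forall>i<n. \<forall>j<n. i \<noteq> j \<longrightarrow> {i, j} \<in> g"
    proof (intro allI impI)
      fix i j assume i: "i < n" and j: "j < n" and ne: "i \<noteq> j"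
      show "{i, j} \<in> g"
      proof (cases "n = 1")
        case True then show ?thesis using i j ne by simp
      next
        case False
        then have "pairwise_stable b c \<gamma> n g" using ps by simp
        then show ?thesis using ps_complete[of c n g i j] h G i j ne by blast
      qed
    qed
    show "efficient b c n g" using complete_efficient[OF _ G comp] h by simp
  qed
  show ?thesis using P1 P2 P3 by blast
qed

end
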